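(* Let $(\mathcal B,<)$ be a monoidal poset with unique maximal element $B_0$. (i) For each $B\in\mathcal B$, each element $w\in W$ of minimal length such that $B=wB_0$, and each node $i$ with $l(r_iw)<l(w)$, we have $r_iB>B$. (ii) For each $B\in\mathcal B$, if $w,w'\in W$ are of minimal length such that $B=wB_0=w'B_0$, then $l(w)=l(w')$, and for each node $i$ with $r_iB>B$ there is $w''\in W$ of length $l(w)$ such that $B=w''B_0$ and $l(r_iw'')<l(w'')$.
   Context: Setting: $M$ is a spherical simply laced Coxeter diagram with nodes $1,\dots,n$ ($i\not\sim j$ means distinct nodes not joined by an edge, or equal); $W$ its Weyl group with length function $l$, positive roots $\Phi^+$, fundamental roots $\alpha_i$, reflections $r_i$, roots of squared length $2$; height $\mathrm{ht}(\sum a_k\alpha_k)=\sum a_k$. For a set $B$ of mutually orthogonal positive roots, $wB=\Phi^+\cap\{\pm w\beta:\beta\in B\}$. A $W$-orbit $\mathcal B$ of such sets is admissible if for every $B\in\mathcal B$, all nodes $i\not\sim j$ and root $\gamma$ with $\gamma,\gamma-\alpha_i+\alpha_j\in B$, $r_iB=r_jB$. For $B,C\in\mathcal B$ write $B\prec C$ if $B\ne C$ and the minimal height of an element of $B\setminus C$ is strictly smaller than the minimal height of an element of $C\setminus B$. For admissible $\mathcal B$, the monoidal poset $(\mathcal B,<)$ is $\mathcal B$ with the partial order $<$ given by the transitive closure of $\{(B,r_jB): B\in\mathcal B,\ j\text{ a node},\ B\prec r_jB\}$; $>$ is the reverse relation. Such a poset has a unique maximal element. *)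

theory Defs
  imports Main
begin

text \<open>Concrete model of a simply laced Coxeter diagram on the nodes 1..n, given by a
  symmetric irreflexive edge relation E.  Vectors of the root lattice are functions
  nat => int (coefficients with respect to the fundamental roots alpha_1..alpha_n).
  The Weyl group is the group of maps generated by the simple reflections r_i acting
  on these vectors; its elements are the maps themselves.\<close>

definition nodes :: "nat \<Rightarrow> nat set" where
  "nodes n = {1..n}"

definition salpha :: "nat \<Rightarrow> nat \<Rightarrow> int" where
  "salpha i = (\<lambda>k. if k = i then 1 else 0)"

definition cartan :: "(nat \<Rightarrow> nat \<Rightarrow> bool) \<Rightarrow> nat \<Rightarrow> nat \<Rightarrow> int" where
  "cartan E j k = (if j = k then 2 else if E j k then -1 else 0)"

definition cform :: "nat \<Rightarrow> (nat \<Rightarrow> nat \<Rightarrow> bool) \<Rightarrow> (nat \<Rightarrow> int) \<Rightarrow> (nat \<Rightarrow> int) \<Rightarrow> int" where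
  "cform n E u v = (\<Sum>j\<in>nodes n. \<Sum>k\<in>nodes n. u j * v k * cartan E j k)"

definition srefl :: "nat \<Rightarrow> (nat \<Rightarrow> nat \<Rightarrow> bool) \<Rightarrow> nat \<Rightarrow> (nat \<Rightarrow> int) \<Rightarrow> (nat \<Rightarrow> int)" where
  "srefl n E i v = (\<lambda>k. v k - cform n E v (salpha i) * salpha i k)"

text \<open>word_act [i1,...,ik] = r_i1 o ... o r_ik\<close>
definition word_act :: "nat \<Rightarrow> (nat \<Rightarrow> nat \<Rightarrow> bool) \<Rightarrow> nat list \<Rightarrow> (nat \<Rightarrow> int) \<Rightarrow> (nat \<Rightarrow> int)" where
  "word_act n E ws = foldr (\<lambda>i f. srefl n E i \<circ> f) ws id"

definition weyl :: "nat \<Rightarrow> (nat \<Rightarrow> nat \<Rightarrow> bool) \<Rightarrow> ((nat \<Rightarrow> int) \<Rightarrow> (nat \<Rightarrow> int)) set" where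
  "weyl n E = {word_act n E ws | ws. set ws \<subseteq> nodes n}"

definition wlen :: "nat \<Rightarrow> (nat \<Rightarrow> nat \<Rightarrow> bool) \<Rightarrow> ((nat \<Rightarrow> int) \<Rightarrow> (nat \<Rightarrow> int)) \<Rightarrow> nat" where
  "wlen n E w = (LEAST k. \<exists>ws. set ws \<subseteq> nodes n \<and> length ws = k \<and> word_act n E ws = w)"

definition sl_spherical :: "nat \<Rightarrow> (nat \<Rightarrow> nat \<Rightarrow> bool) \<Rightarrow> bool" where
  "sl_spherical n E \<longleftrightarrow> (\<forall>i j. E i j \<longrightarrow> E j i) \<and> (\<forall>i. \<not> E i i)
     \<and> (\<forall>i j. E i j \<longrightarrow> i \<in> nodes n \<and> j \<in> nodes n) \<and> finite (weyl n E)"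

definition roots :: "nat \<Rightarrow> (nat \<Rightarrow> nat \<Rightarrow> bool) \<Rightarrow> (nat \<Rightarrow> int) set" where
  "roots n E = {w (salpha i) | w i. w \<in> weyl n E \<and> i \<in> nodes n}"

definition pos_roots :: "nat \<Rightarrow> (nat \<Rightarrow> nat \<Rightarrow> bool) \<Rightarrow> (nat \<Rightarrow> int) set" where
  "pos_roots n E = {\<beta> \<in> roots n E. \<forall>k. 0 \<le> \<beta> k}"

definition ht :: "nat \<Rightarrow> (nat \<Rightarrow> int) \<Rightarrow> int" where
  "ht n \<beta> = (\<Sum>k\<in>nodes n. \<beta> k)"

definition orth_set :: "nat \<Rightarrow> (nat \<Rightarrow> nat \<Rightarrow> bool) \<Rightarrow> (nat \<Rightarrow> int) set \<Rightarrow> bool" where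
  "orth_set n E B \<longleftrightarrow> B \<subseteq> pos_roots n E \<and> (\<forall>\<beta>\<in>B. \<forall>\<gamma>\<in>B. \<beta> \<noteq> \<gamma> \<longrightarrow> cform n E \<beta> \<gamma> = 0)"

definition act_set :: "nat \<Rightarrow> (nat \<Rightarrow> nat \<Rightarrow> bool) \<Rightarrow> ((nat \<Rightarrow> int) \<Rightarrow> (nat \<Rightarrow> int))
     \<Rightarrow> (nat \<Rightarrow> int) set \<Rightarrow> (nat \<Rightarrow> int) set" where
  "act_set n E w B = {\<gamma> \<in> pos_roots n E. \<exists>\<beta>\<in>B. \<gamma> = w \<beta> \<or> \<gamma> = (\<lambda>k. - w \<beta> k)}"

definition admissible :: "nat \<Rightarrow> (nat \<Rightarrow> nat \<Rightarrow> bool) \<Rightarrow> (nat \<Rightarrow> int) set set \<Rightarrow> bool" where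
  "admissible n E \<B> \<longleftrightarrow>
     (\<exists>B. orth_set n E B \<and> \<B> = {act_set n E w B | w. w \<in> weyl n E}) \<and>
     (\<forall>B\<in>\<B>. \<forall>i\<in>nodes n. \<forall>j\<in>nodes n. (i = j \<or> \<not> E i j) \<longrightarrow>
        (\<forall>\<gamma>. \<gamma> \<in> B \<and> (\<lambda>k. \<gamma> k - salpha i k + salpha j k) \<in> B \<longrightarrow>
            act_set n E (srefl n E i) B = act_set n E (srefl n E j) B))"

definition prec :: "nat \<Rightarrow> (nat \<Rightarrow> int) set \<Rightarrow> (nat \<Rightarrow> int) set \<Rightarrow> bool" where
  "prec n B C \<longleftrightarrow> B \<noteq> C \<and> Min (ht n ` (B - C)) < Min (ht n ` (C - B))"

text \<open>The strict order < of the monoidal poset: pairs (B, C) meaning B < C.\<close>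
definition mon_less :: "nat \<Rightarrow> (nat \<Rightarrow> nat \<Rightarrow> bool) \<Rightarrow> (nat \<Rightarrow> int) set set
     \<Rightarrow> ((nat \<Rightarrow> int) set \<times> (nat \<Rightarrow> int) set) set" where
  "mon_less n E \<B> = {(B, act_set n E (srefl n E j) B) | B j.
       B \<in> \<B> \<and> j \<in> nodes n \<and> prec n B (act_set n E (srefl n E j) B)}\<^sup>+"

definition min_rep :: "nat \<Rightarrow> (nat \<Rightarrow> nat \<Rightarrow> bool) \<Rightarrow> (nat \<Rightarrow> int) set \<Rightarrow> (nat \<Rightarrow> int) set
     \<Rightarrow> ((nat \<Rightarrow> int) \<Rightarrow> (nat \<Rightarrow> int)) \<Rightarrow> bool" where
  "min_rep n E B0 B w \<longleftrightarrow> w \<in> weyl n E \<and> act_set n E w B0 = B \<and>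
     (\<forall>w'\<in>weyl n E. act_set n E w' B0 = B \<longrightarrow> wlen n E w \<le> wlen n E w')"

end

theory Submission
  imports Defs Complex_Main
begin

lemma finite_nodes[simp]: "finite (nodes n)" by (simp add: nodes_def)

lemma salpha_simp: "salpha i k = (if k = i then 1 else 0)" by (simp add: salpha_def)

lemma cform_add1: "cform n E (\<lambda>k. u k + v k) z = cform n E u z + cform n E v z"
  by (simp add: cform_def algebra_simps sum.distrib)
lemma cform_scale1: "cform n E (\<lambda>k. c * u k) z = c * cform n E u z"
  by (simp add: cform_def algebra_simps sum_distrib_left)
lemma cform_diff1: "cform n E (\<lambda>k. u k - v k) z = cform n E u z - cform n E v z"
  by (simp add: cform_def algebra_simps sum_subtractf)
lemma cform_neg1: "cform n E (\<lambda>k. - u k) z = - cform n E u z"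
  by (simp add: cform_def algebra_simps sum_negf)
lemma cform_add2: "cform n E z (\<lambda>k. u k + v k) = cform n E z u + cform n E z v"
  by (simp add: cform_def algebra_simps sum.distrib)
lemma cform_scale2: "cform n E z (\<lambda>k. c * u k) = c * cform n E z u"
  by (simp add: cform_def algebra_simps sum_distrib_left)
lemma cform_diff2: "cform n E z (\<lambda>k. u k - v k) = cform n E z u - cform n E z v"
  by (simp add: cform_def algebra_simps sum_subtractf)
lemma cform_neg2: "cform n E z (\<lambda>k. - u k) = - cform n E z u"
  by (simp add: cform_def algebra_simps sum_negf)

lemma cform_alpha2: "i \<in> nodes n \<Longrightarrow> cform n E u (salpha i) = (\<Sum>j\<in>nodes n. u j * cartan E j i)"
proof -
  assume i: "i \<in> nodes n"
  have "cform n E u (salpha i) = (\<Sum>j\<in>nodes n. \<Sum>k\<in>nodes n. if k = i then u j * cartan E j k else 0)"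
    unfolding cform_def salpha_def by (intro sum.cong refl) auto
  also have "\<dots> = (\<Sum>j\<in>nodes n. u j * cartan E j i)"
    using i by (simp add: sum.delta')
  finally show ?thesis .
qed

lemma cform_alpha1: "i \<in> nodes n \<Longrightarrow> cform n E (salpha i) u = (\<Sum>k\<in>nodes n. u k * cartan E i k)"
proof -
  assume i: "i \<in> nodes n"
  have "cform n E (salpha i) u = (\<Sum>j\<in>nodes n. if j = i then (\<Sum>k\<in>nodes n. u k * cartan E j k) else 0)"
    unfolding cform_def salpha_def by (intro sum.cong refl) (auto simp: mult.commute)
  also have "\<dots> = (\<Sum>k\<in>nodes n. u k * cartan E i k)"
    using i by (simp add: sum.delta')
  finally show ?thesis .
qed

lemma cform_alpha_alpha: "i \<in> nodes n \<Longrightarrow> j \<in> nodes n \<Longrightarrow> cform n E (salpha i) (salpha j) = cartan E i j"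
proof -
  assume a: "i \<in> nodes n" "j \<in> nodes n"
  have "cform n E (salpha i) (salpha j) = (\<Sum>k\<in>nodes n. salpha j k * cartan E i k)"
    using a(1) by (rule cform_alpha1)
  also have "\<dots> = (\<Sum>k\<in>nodes n. if k = j then cartan E i k else 0)"
    by (intro sum.cong refl) (simp add: salpha_def)
  also have "\<dots> = cartan E i j" using a by (simp add: sum.delta')
  finally show ?thesis .
qed

lemma word_act_Nil[simp]: "word_act n E [] = id" by (simp add: word_act_def)
lemma word_act_Cons[simp]: "word_act n E (i # ws) = srefl n E i \<circ> word_act n E ws"
  by (simp add: word_act_def)
lemma word_act_append: "word_act n E (ws @ vs) = word_act n E ws \<circ> word_act n E vs"
  by (induction ws) (auto simp: comp_assoc)

context
  fixes n :: nat and E :: "nat \<Rightarrow> nat \<Rightarrow> bool"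
  assumes diag: "sl_spherical n E"
begin

lemma E_sym: "E i j \<Longrightarrow> E j i" using diag by (auto simp: sl_spherical_def)
lemma E_irr: "\<not> E i i" using diag by (auto simp: sl_spherical_def)
lemma finite_W: "finite (weyl n E)" using diag by (auto simp: sl_spherical_def)

lemma cartan_sym: "cartan E i j = cartan E j i"
  unfolding cartan_def using E_sym by auto

lemma cform_sym: "cform n E u v = cform n E v u"
  unfolding cform_def
  by (subst sum.swap) (simp add: cartan_sym mult.commute mult.left_commute)

lemma cform_alpha_self: "i \<in> nodes n \<Longrightarrow> cform n E (salpha i) (salpha i) = 2"
  by (simp add: cform_alpha_alpha cartan_def)

lemma srefl_apply: "srefl n E i v k = v k - cform n E v (salpha i) * salpha i k"
  by (simp add: srefl_def)

lemma cform_srefl1: "cform n E (srefl n E i u) z = cform n E u z - cform n E u (salpha i) * cform n E (salpha i) z"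
proof -
  have "srefl n E i u = (\<lambda>k. u k - cform n E u (salpha i) * salpha i k)" by (simp add: srefl_def)
  then show ?thesis by (simp add: cform_diff1 cform_scale1)
qed

lemma cform_srefl_alpha: "i \<in> nodes n \<Longrightarrow> cform n E (srefl n E i u) (salpha i) = - cform n E u (salpha i)"
  by (simp add: cform_srefl1 cform_alpha_self)

lemma srefl_invol: "i \<in> nodes n \<Longrightarrow> srefl n E i (srefl n E i v) = v"
  by (rule ext) (simp add: srefl_apply cform_srefl_alpha algebra_simps)

lemma srefl_comp_invol: "i \<in> nodes n \<Longrightarrow> srefl n E i \<circ> srefl n E i = id"
  by (rule ext) (simp add: srefl_invol)

lemma cform_srefl_srefl: "i \<in> nodes n \<Longrightarrow> cform n E (srefl n E i u) (srefl n E i v) = cform n E u v"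
proof -
  assume i: "i \<in> nodes n"
  have "srefl n E i v = (\<lambda>k. v k - cform n E v (salpha i) * salpha i k)" by (simp add: srefl_def)
  then have "cform n E (srefl n E i u) (srefl n E i v) = cform n E (srefl n E i u) v - cform n E v (salpha i) * cform n E (srefl n E i u) (salpha i)"
    by (simp add: cform_diff2 cform_scale2)
  also have "\<dots> = cform n E u v"
    using i by (simp add: cform_srefl_alpha cform_srefl1 cform_sym[of "salpha i" v] cform_alpha_self[OF i] algebra_simps)
  finally show ?thesis .
qed

lemma srefl_lin: "srefl n E i (\<lambda>k. a * u k + b * v k) = (\<lambda>k. a * srefl n E i u k + b * srefl n E i v k)"
  by (rule ext) (simp add: srefl_apply cform_add1 cform_scale1 algebra_simps)

lemma srefl_neg: "srefl n E i (\<lambda>k. - u k) = (\<lambda>k. - srefl n E i u k)"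
  by (rule ext) (simp add: srefl_apply cform_neg1 algebra_simps)

lemma srefl_commute:
  assumes "i \<in> nodes n" "j \<in> nodes n" "i \<noteq> j" "\<not> E i j"
  shows "srefl n E i \<circ> srefl n E j = srefl n E j \<circ> srefl n E i"
proof -
  have c: "cform n E (salpha j) (salpha i) = 0" "cform n E (salpha i) (salpha j) = 0"
    using assms by (auto simp: cform_alpha_alpha cartan_def E_sym)
  show ?thesis
    by (rule ext, rule ext) (simp add: srefl_apply cform_srefl1 c algebra_simps)
qed

lemma srefl_braid:
  assumes "i \<in> nodes n" "j \<in> nodes n" "E i j"
  shows "srefl n E i \<circ> srefl n E j \<circ> srefl n E i = srefl n E j \<circ> srefl n E i \<circ> srefl n E j"
proof -
  have ij: "i \<noteq> j" using assms E_irr by auto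
  have c: "cform n E (salpha j) (salpha i) = -1" "cform n E (salpha i) (salpha j) = -1"
    using assms ij by (auto simp: cform_alpha_alpha cartan_def E_sym)
  have s: "cform n E (salpha i) (salpha i) = 2" "cform n E (salpha j) (salpha j) = 2"
    using assms by (auto simp: cform_alpha_self)
  show ?thesis
    by (rule ext, rule ext) (simp add: srefl_apply cform_srefl1 c s algebra_simps)
qed

end

lemma weyl_iff: "w \<in> weyl n E \<longleftrightarrow> (\<exists>ws. set ws \<subseteq> nodes n \<and> w = word_act n E ws)"
  by (auto simp: weyl_def)

lemma id_weyl: "id \<in> weyl n E"
  unfolding weyl_iff by (rule exI[of _ "[]"]) simp

lemma word_weyl: "set ws \<subseteq> nodes n \<Longrightarrow> word_act n E ws \<in> weyl n E"
  unfolding weyl_iff by blast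

lemma srefl_comp_weyl: "i \<in> nodes n \<Longrightarrow> w \<in> weyl n E \<Longrightarrow> srefl n E i \<circ> w \<in> weyl n E"
proof -
  assume i: "i \<in> nodes n" and "w \<in> weyl n E"
  then obtain ws where "set ws \<subseteq> nodes n" "w = word_act n E ws" by (auto simp: weyl_iff)
  then show ?thesis using i unfolding weyl_iff by (intro exI[of _ "i # ws"]) auto
qed

lemma weyl_comp: "w \<in> weyl n E \<Longrightarrow> v \<in> weyl n E \<Longrightarrow> w \<circ> v \<in> weyl n E"
proof -
  assume "w \<in> weyl n E" "v \<in> weyl n E"
  then obtain ws vs where "set ws \<subseteq> nodes n" "w = word_act n E ws" "set vs \<subseteq> nodes n" "v = word_act n E vs" by (auto simp: weyl_iff)
  then show ?thesis unfolding weyl_iff by (intro exI[of _ "ws @ vs"]) (auto simp: word_act_append)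
qed

lemma srefl_weyl: "i \<in> nodes n \<Longrightarrow> srefl n E i \<in> weyl n E"
  using srefl_comp_weyl[OF _ id_weyl] by simp

lemma weyl_comp_srefl: "i \<in> nodes n \<Longrightarrow> w \<in> weyl n E \<Longrightarrow> w \<circ> srefl n E i \<in> weyl n E"
  using weyl_comp srefl_weyl by blast

lemma wlen_word: "set ws \<subseteq> nodes n \<Longrightarrow> wlen n E (word_act n E ws) \<le> length ws"
  unfolding wlen_def by (rule Least_le) blast

lemma wlen_ex: "w \<in> weyl n E \<Longrightarrow> \<exists>ws. set ws \<subseteq> nodes n \<and> length ws = wlen n E w \<and> word_act n E ws = w"
proof -
  assume "w \<in> weyl n E"
  then obtain ws where "set ws \<subseteq> nodes n" "w = word_act n E ws" by (auto simp: weyl_iff)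
  then have "\<exists>k ws. set ws \<subseteq> nodes n \<and> length ws = k \<and> word_act n E ws = w" by blast
  then show ?thesis unfolding wlen_def by (rule LeastI_ex)
qed

lemma wlen_srefl_comp: "i \<in> nodes n \<Longrightarrow> w \<in> weyl n E \<Longrightarrow> wlen n E (srefl n E i \<circ> w) \<le> wlen n E w + 1"
proof -
  assume i: "i \<in> nodes n" and w: "w \<in> weyl n E"
  obtain ws where ws: "set ws \<subseteq> nodes n" "length ws = wlen n E w" "word_act n E ws = w"
    using wlen_ex[OF w] by blast
  have "wlen n E (word_act n E (i # ws)) \<le> length (i # ws)" using i ws by (intro wlen_word) auto
  then show ?thesis using ws by simp
qed

context
  fixes n :: nat and E :: "nat \<Rightarrow> nat \<Rightarrow> bool"
  assumes diag: "sl_spherical n E"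
begin

lemma word_lin: "word_act n E ws (\<lambda>k. a * u k + b * v k) = (\<lambda>k. a * word_act n E ws u k + b * word_act n E ws v k)"
  by (induction ws) (simp_all add: srefl_lin[OF diag])

lemma word_neg: "word_act n E ws (\<lambda>k. - u k) = (\<lambda>k. - word_act n E ws u k)"
  by (induction ws) (simp_all add: srefl_neg[OF diag])

lemma weyl_lin: "w \<in> weyl n E \<Longrightarrow> w (\<lambda>k. a * u k + b * v k) = (\<lambda>k. a * w u k + b * w v k)"
  by (auto simp: weyl_iff word_lin)

lemma weyl_neg: "w \<in> weyl n E \<Longrightarrow> w (\<lambda>k. - u k) = (\<lambda>k. - w u k)"
  by (auto simp: weyl_iff word_neg)

lemma weyl_diff: "w \<in> weyl n E \<Longrightarrow> w (\<lambda>k. u k - c * v k) = (\<lambda>k. w u k - c * w v k)"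
  using weyl_lin[of w 1 u "-c" v] by simp

lemma word_cform: "set ws \<subseteq> nodes n \<Longrightarrow> cform n E (word_act n E ws u) (word_act n E ws v) = cform n E u v"
  by (induction ws) (simp_all add: cform_srefl_srefl[OF diag])

lemma weyl_cform: "w \<in> weyl n E \<Longrightarrow> cform n E (w u) (w v) = cform n E u v"
  by (auto simp: weyl_iff word_cform)

lemma word_rev_inv: "set ws \<subseteq> nodes n \<Longrightarrow> word_act n E (rev ws) \<circ> word_act n E ws = id"
proof (induction ws)
  case Nil then show ?case by simp
next
  case (Cons i ws)
  have "word_act n E (rev (i # ws)) \<circ> word_act n E (i # ws)
      = word_act n E (rev ws) \<circ> (word_act n E [i] \<circ> srefl n E i) \<circ> word_act n E ws"
    by (simp add: word_act_append comp_assoc)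
  also have "\<dots> = word_act n E (rev ws) \<circ> word_act n E ws"
    using Cons.prems by (simp add: srefl_comp_invol[OF diag])
  also have "\<dots> = id" by (rule Cons.IH) (use Cons.prems in auto)
  finally show ?case .
qed

lemma weyl_inv: "w \<in> weyl n E \<Longrightarrow> \<exists>v\<in>weyl n E. v \<circ> w = id \<and> w \<circ> v = id"
proof -
  assume "w \<in> weyl n E"
  then obtain ws where ws: "set ws \<subseteq> nodes n" "w = word_act n E ws" by (auto simp: weyl_iff)
  have "word_act n E ws \<circ> word_act n E (rev ws) = id"
    using word_rev_inv[of "rev ws"] ws by simp
  then show ?thesis using ws word_rev_inv[of ws] by (intro bexI[of _ "word_act n E (rev ws)"] word_weyl) auto
qed

lemma srefl_supp: "i \<in> nodes n \<Longrightarrow> k \<notin> nodes n \<Longrightarrow> srefl n E i v k = v k"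
  by (auto simp: srefl_apply[OF diag] salpha_def)

lemma word_supp: "set ws \<subseteq> nodes n \<Longrightarrow> k \<notin> nodes n \<Longrightarrow> word_act n E ws v k = v k"
  by (induction ws) (auto simp: srefl_supp)

lemma weyl_supp: "w \<in> weyl n E \<Longrightarrow> k \<notin> nodes n \<Longrightarrow> w v k = v k"
  by (auto simp: weyl_iff word_supp)

end

lemma double_sum_even:
  fixes f :: "nat \<Rightarrow> nat \<Rightarrow> int"
  assumes "finite A" "\<And>j k. f j k = f k j" "\<And>j. even (f j j)"
  shows "even (\<Sum>j\<in>A. \<Sum>k\<in>A. f j k)"
  using assms(1)
proof (induction A rule: finite_induct)
  case empty then show ?case by simp
next
  case (insert a A)
  have "(\<Sum>j\<in>insert a A. \<Sum>k\<in>insert a A. f j k)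
      = f a a + (\<Sum>k\<in>A. f a k) + ((\<Sum>j\<in>A. f j a) + (\<Sum>j\<in>A. \<Sum>k\<in>A. f j k))"
    using insert by (simp add: sum.distrib)
  also have "(\<Sum>j\<in>A. f j a) = (\<Sum>k\<in>A. f a k)" using assms(2) by simp
  finally show ?case using insert assms(3)[of a] by simp
qed

lemma quad_expand:
  fixes x :: "nat \<Rightarrow> real" and a :: "'w \<Rightarrow> nat \<Rightarrow> nat \<Rightarrow> real"
  shows "(\<Sum>i\<in>I. \<Sum>j\<in>I. x i * x j * (\<Sum>w\<in>Ws. \<Sum>k\<in>K. a w i k * a w j k))
       = (\<Sum>w\<in>Ws. \<Sum>k\<in>K. (\<Sum>i\<in>I. x i * a w i k) * (\<Sum>j\<in>I. x j * a w j k))"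
proof -
  have "(\<Sum>i\<in>I. \<Sum>j\<in>I. x i * x j * (\<Sum>w\<in>Ws. \<Sum>k\<in>K. a w i k * a w j k))
      = (\<Sum>i\<in>I. \<Sum>j\<in>I. \<Sum>w\<in>Ws. \<Sum>k\<in>K. (x i * a w i k) * (x j * a w j k))"
    by (simp add: sum_distrib_left mult_ac)
  also have "\<dots> = (\<Sum>i\<in>I. \<Sum>w\<in>Ws. \<Sum>j\<in>I. \<Sum>k\<in>K. (x i * a w i k) * (x j * a w j k))"
    by (rule sum.cong[OF refl], rule sum.swap)
  also have "\<dots> = (\<Sum>i\<in>I. \<Sum>w\<in>Ws. \<Sum>k\<in>K. \<Sum>j\<in>I. (x i * a w i k) * (x j * a w j k))"
    by (rule sum.cong[OF refl], rule sum.cong[OF refl], rule sum.swap)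
  also have "\<dots> = (\<Sum>w\<in>Ws. \<Sum>i\<in>I. \<Sum>k\<in>K. \<Sum>j\<in>I. (x i * a w i k) * (x j * a w j k))"
    by (rule sum.swap)
  also have "\<dots> = (\<Sum>w\<in>Ws. \<Sum>k\<in>K. \<Sum>i\<in>I. \<Sum>j\<in>I. (x i * a w i k) * (x j * a w j k))"
    by (rule sum.cong[OF refl], rule sum.swap)
  also have "\<dots> = (\<Sum>w\<in>Ws. \<Sum>k\<in>K. (\<Sum>i\<in>I. x i * a w i k) * (\<Sum>j\<in>I. x j * a w j k))"
    by (simp add: sum_product)
  finally show ?thesis .
qed

context
  fixes n :: nat and E :: "nat \<Rightarrow> nat \<Rightarrow> bool"
  assumes diag: "sl_spherical n E"
begin

lemma cform_even: "even (cform n E v v)"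
  unfolding cform_def
proof (rule double_sum_even)
  fix j k
  show "v j * v k * cartan E j k = v k * v j * cartan E k j"
    using cartan_sym[OF diag, of j k] by simp
next
  fix j show "even (v j * v j * cartan E j j)" by (simp add: cartan_def)
qed simp

definition PP :: "(nat \<Rightarrow> int) \<Rightarrow> (nat \<Rightarrow> int) \<Rightarrow> int" where
  "PP u v = (\<Sum>w\<in>weyl n E. \<Sum>k\<in>nodes n. w u k * w v k)"

lemma PP_sym: "PP u v = PP v u"
  unfolding PP_def by (simp add: mult.commute)

lemma PP_diff1: "PP (\<lambda>k. u k - c * v k) z = PP u z - c * PP v z"
  unfolding PP_def
  by (simp add: weyl_diff[OF diag] algebra_simps sum_subtractf sum_distrib_left)

lemma PP_neg1: "PP (\<lambda>k. - u k) z = - PP u z"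
  unfolding PP_def
  by (simp add: weyl_neg[OF diag] sum_negf)

lemma PP_srefl:
  assumes i: "i \<in> nodes n"
  shows "PP (srefl n E i u) (srefl n E i v) = PP u v"
proof -
  let ?h = "\<lambda>w. w \<circ> srefl n E i"
  let ?g = "\<lambda>w. \<Sum>k\<in>nodes n. w u k * w v k"
  have "(\<Sum>w\<in>weyl n E. ?g w) = (\<Sum>w\<in>weyl n E. ?g (?h w))"
    by (rule sum.reindex_bij_witness[where i = ?h and j = ?h])
       (use i in \<open>auto simp: comp_assoc srefl_comp_invol[OF diag] weyl_comp_srefl\<close>)
  then show ?thesis unfolding PP_def by simp
qed

lemma srefl_alpha_self: "i \<in> nodes n \<Longrightarrow> srefl n E i (salpha i) = (\<lambda>k. - salpha i k)"
  by (rule ext) (simp add: srefl_apply[OF diag] cform_alpha_self[OF diag])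

lemma PP_alpha: 
  assumes i: "i \<in> nodes n"
  shows "2 * PP (salpha i) v = cform n E v (salpha i) * PP (salpha i) (salpha i)"
proof -
  let ?c = "cform n E v (salpha i)"
  have r: "srefl n E i v = (\<lambda>k. v k - ?c * salpha i k)" by (simp add: srefl_def)
  have "PP (salpha i) v = PP (srefl n E i (salpha i)) (srefl n E i v)" using PP_srefl[OF i] by simp
  also have "\<dots> = - PP (salpha i) (\<lambda>k. v k - ?c * salpha i k)"
    using i by (simp add: srefl_alpha_self r PP_neg1)
  also have "PP (salpha i) (\<lambda>k. v k - ?c * salpha i k) = PP (\<lambda>k. v k - ?c * salpha i k) (salpha i)"
    by (rule PP_sym)
  also have "\<dots> = PP v (salpha i) - ?c * PP (salpha i) (salpha i)"
    by (rule PP_diff1)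
  also have "PP v (salpha i) = PP (salpha i) v" by (rule PP_sym)
  finally show ?thesis by simp
qed

lemma PP_self_pos: "i \<in> nodes n \<Longrightarrow> PP (salpha i) (salpha i) > 0"
proof -
  assume i: "i \<in> nodes n"
  have nn: "\<And>w :: (nat \<Rightarrow> int) \<Rightarrow> nat \<Rightarrow> int. (\<Sum>k\<in>nodes n. w (salpha i) k * w (salpha i) k) \<ge> 0"
    by (intro sum_nonneg) (rule zero_le_square)
  have "(\<Sum>k\<in>nodes n. id (salpha i) k * id (salpha i) k) \<le> PP (salpha i) (salpha i)"
    unfolding PP_def
    by (rule member_le_sum[OF id_weyl]) (use nn finite_W[OF diag] in auto)
  moreover have "(\<Sum>k\<in>nodes n. id (salpha i) k * id (salpha i) k) = 1"
    using i by (simp add: salpha_def if_distrib sum.delta' cong: if_cong)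
  ultimately show ?thesis by simp
qed


definition GG :: "nat \<Rightarrow> nat \<Rightarrow> int" where
  "GG i j = PP (salpha i) (salpha j)"

lemma GG_rel: "i \<in> nodes n \<Longrightarrow> j \<in> nodes n \<Longrightarrow> 2 * GG i j = cartan E i j * GG i i"
  using PP_alpha[of i "salpha j"] cform_alpha_alpha[of j n i E] cartan_sym[OF diag, of i j]
  by (simp add: GG_def)

lemma GG_sym: "GG i j = GG j i" by (simp add: GG_def PP_sym)

lemma GG_pos: "i \<in> nodes n \<Longrightarrow> GG i i > 0" by (simp add: GG_def PP_self_pos)

lemma GG_eq: "i \<in> nodes n \<Longrightarrow> j \<in> nodes n \<Longrightarrow> cartan E i j \<noteq> 0 \<Longrightarrow> GG i i = GG j j"
  using GG_rel[of i j] GG_rel[of j i] GG_sym[of i j] cartan_sym[OF diag, of i j] by auto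

lemma cform_pos_real:
  assumes k: "k \<in> nodes n" "v k \<noteq> 0"
  shows "cform n E v v > 0"
proof -
  define cc where "cc i = real_of_int (GG i i) / 2" for i
  define x where "x i = real_of_int (v i) / sqrt (cc i)" for i
  define a where "a w i k = real_of_int (w (salpha i) k)" for w :: "(nat \<Rightarrow> int) \<Rightarrow> nat \<Rightarrow> int" and i k
  have ccpos: "i \<in> nodes n \<Longrightarrow> cc i > 0" for i using GG_pos[of i] by (simp add: cc_def)
  have key: "real_of_int (v i * v j * cartan E i j) = x i * x j * real_of_int (GG i j)"
    if ij: "i \<in> nodes n" "j \<in> nodes n" for i j
  proof (cases "cartan E i j = 0")
    case True
    then have "GG i j = 0" using GG_rel[OF ij] by simp
    then show ?thesis using True by simp
  next
    case False
    have e: "cc j = cc i" using GG_eq[OF ij False] by (simp add: cc_def)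
    have g: "real_of_int (GG i j) = real_of_int (cartan E i j) * cc i"
      using GG_rel[OF ij] by (simp add: cc_def) (metis of_int_mult of_int_numeral field_sum_of_halves mult.commute times_divide_eq_right)
    have s: "sqrt (cc i) * sqrt (cc i) = cc i" using ccpos[OF ij(1)] by simp
    have "x i * x j * real_of_int (GG i j) = real_of_int (v i) * real_of_int (v j) * real_of_int (cartan E i j) * (cc i / (sqrt (cc i) * sqrt (cc i)))"
      unfolding x_def e g by (simp add: field_simps)
    also have "\<dots> = real_of_int (v i * v j * cartan E i j)" using s ccpos[OF ij(1)] by simp
    finally show ?thesis by simp
  qed
  have GGa: "real_of_int (GG i j) = (\<Sum>w\<in>weyl n E. \<Sum>k\<in>nodes n. a w i k * a w j k)" for i j
    by (simp add: GG_def PP_def a_def)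
  have "real_of_int (cform n E v v) = (\<Sum>i\<in>nodes n. \<Sum>j\<in>nodes n. real_of_int (v i * v j * cartan E i j))"
    by (simp add: cform_def)
  also have "\<dots> = (\<Sum>i\<in>nodes n. \<Sum>j\<in>nodes n. x i * x j * (\<Sum>w\<in>weyl n E. \<Sum>k\<in>nodes n. a w i k * a w j k))"
    using key by (simp add: GGa)
  also have "\<dots> = (\<Sum>w\<in>weyl n E. \<Sum>k\<in>nodes n. (\<Sum>i\<in>nodes n. x i * a w i k) * (\<Sum>j\<in>nodes n. x j * a w j k))"
    by (rule quad_expand)
  finally have eq: "real_of_int (cform n E v v) = (\<Sum>w\<in>weyl n E. \<Sum>k\<in>nodes n. (\<Sum>i\<in>nodes n. x i * a w i k) * (\<Sum>j\<in>nodes n. x j * a w j k))" .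
  have ge: "(\<Sum>k\<in>nodes n. (\<Sum>i\<in>nodes n. x i * a id i k) * (\<Sum>j\<in>nodes n. x j * a id j k)) \<le> (\<Sum>w\<in>weyl n E. \<Sum>k\<in>nodes n. (\<Sum>i\<in>nodes n. x i * a w i k) * (\<Sum>j\<in>nodes n. x j * a w j k))"
    by (rule member_le_sum[OF id_weyl]) (auto intro!: sum_nonneg simp: finite_W[OF diag])
  have e2: "(\<Sum>k\<in>nodes n. (\<Sum>i\<in>nodes n. x i * a id i k) * (\<Sum>j\<in>nodes n. x j * a id j k)) = (\<Sum>k\<in>nodes n. x k * x k)"
  proof (rule sum.cong[OF refl])
    fix k assume k: "k \<in> nodes n"
    have "(\<Sum>i\<in>nodes n. x i * a id i k) = (\<Sum>i\<in>nodes n. if i = k then x i else 0)"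
      by (rule sum.cong) (auto simp: a_def salpha_def)
    also have "\<dots> = x k" using k by (simp add: sum.delta')
    finally show "(\<Sum>i\<in>nodes n. x i * a id i k) * (\<Sum>j\<in>nodes n. x j * a id j k) = x k * x k" by simp
  qed
  have pos: "(\<Sum>k\<in>nodes n. x k * x k) > 0"
  proof -
    have "x k \<noteq> 0" using k ccpos[of k] by (simp add: x_def)
    then have "0 < x k * x k" by (auto simp: zero_less_mult_iff linorder_neq_iff)
    also have "x k * x k \<le> (\<Sum>k\<in>nodes n. x k * x k)"
      by (rule member_le_sum[OF k(1)]) auto
    finally show ?thesis .
  qed
  have "real_of_int (cform n E v v) > 0" using eq ge e2 pos by linarith
  then show ?thesis by simp
qed

lemma cform_ge2:
  assumes "k \<in> nodes n" "v k \<noteq> 0"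
  shows "cform n E v v \<ge> 2"
  using cform_pos_real[of k v, OF assms] cform_even[of v] by presburger

lemma cform_nonneg: "cform n E v v \<ge> 0"
proof (cases "\<exists>k\<in>nodes n. v k \<noteq> 0")
  case True then show ?thesis using cform_pos_real by fastforce
next
  case False then show ?thesis by (simp add: cform_def)
qed

end

lemma ht_diff: "ht n (\<lambda>k. u k - v k) = ht n u - ht n v"
  by (simp add: ht_def sum_subtractf)
lemma ht_add: "ht n (\<lambda>k. u k + v k) = ht n u + ht n v"
  by (simp add: ht_def sum.distrib)
lemma ht_neg: "ht n (\<lambda>k. - u k) = - ht n u"
  by (simp add: ht_def sum_negf)
lemma ht_scale: "ht n (\<lambda>k. c * u k) = c * ht n u"
  by (simp add: ht_def sum_distrib_left)
lemma ht_alpha: "i \<in> nodes n \<Longrightarrow> ht n (salpha i) = 1"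
  by (simp add: ht_def salpha_def)

lemma cartan_ne1: "cartan E i j \<noteq> 1" by (simp add: cartan_def)

context
  fixes n :: nat and E :: "nat \<Rightarrow> nat \<Rightarrow> bool"
  assumes diag: "sl_spherical n E"
begin

lemma ht_srefl: "i \<in> nodes n \<Longrightarrow> ht n (srefl n E i v) = ht n v - cform n E v (salpha i)"
proof -
  assume i: "i \<in> nodes n"
  have "srefl n E i v = (\<lambda>k. v k - cform n E v (salpha i) * salpha i k)" by (simp add: srefl_def)
  then show ?thesis using i by (simp add: ht_diff ht_scale ht_alpha)
qed

lemma roots_iff: "\<beta> \<in> roots n E \<longleftrightarrow> (\<exists>w\<in>weyl n E. \<exists>i\<in>nodes n. \<beta> = w (salpha i))"
  by (auto simp: roots_def)

lemma alpha_root: "i \<in> nodes n \<Longrightarrow> salpha i \<in> roots n E"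
proof -
  assume i: "i \<in> nodes n"
  have "salpha i = id (salpha i)" by simp
  then show ?thesis using id_weyl[of n E] i unfolding roots_iff by blast
qed

lemma root_weyl: "w \<in> weyl n E \<Longrightarrow> \<beta> \<in> roots n E \<Longrightarrow> w \<beta> \<in> roots n E"
proof -
  assume w: "w \<in> weyl n E" and "\<beta> \<in> roots n E"
  then obtain u i where u: "u \<in> weyl n E" "i \<in> nodes n" "\<beta> = u (salpha i)" by (auto simp: roots_iff)
  have "w \<beta> = (w \<circ> u) (salpha i)" using u by simp
  then show ?thesis using weyl_comp[OF w u(1)] u(2) unfolding roots_iff by blast
qed

lemma root_srefl: "i \<in> nodes n \<Longrightarrow> \<beta> \<in> roots n E \<Longrightarrow> srefl n E i \<beta> \<in> roots n E"
  using root_weyl srefl_weyl by blast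

lemma root_neg: "\<beta> \<in> roots n E \<Longrightarrow> (\<lambda>k. - \<beta> k) \<in> roots n E"
proof -
  assume "\<beta> \<in> roots n E"
  then obtain w i where w: "w \<in> weyl n E" "i \<in> nodes n" "\<beta> = w (salpha i)" by (auto simp: roots_iff)
  have "(\<lambda>k. - \<beta> k) = (w \<circ> srefl n E i) (salpha i)"
    using w by (simp add: srefl_alpha_self[OF diag] weyl_neg[OF diag])
  then show ?thesis using w weyl_comp_srefl[of i n w E] unfolding roots_iff by blast
qed

lemma root_norm: "\<beta> \<in> roots n E \<Longrightarrow> cform n E \<beta> \<beta> = 2"
  by (auto simp: roots_iff weyl_cform[OF diag] cform_alpha_self[OF diag])

lemma root_supp: "\<beta> \<in> roots n E \<Longrightarrow> k \<notin> nodes n \<Longrightarrow> \<beta> k = 0"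
  by (auto simp: roots_iff weyl_supp[OF diag] salpha_def)

lemma zero_on_nodes_cform: "(\<forall>k\<in>nodes n. v k = 0) \<Longrightarrow> cform n E v u = 0"
  by (simp add: cform_def)

lemma root_nz: "\<beta> \<in> roots n E \<Longrightarrow> \<exists>k\<in>nodes n. \<beta> k \<noteq> 0"
proof (rule ccontr)
  assume r: "\<beta> \<in> roots n E" and "\<not> (\<exists>k\<in>nodes n. \<beta> k \<noteq> 0)"
  then have "cform n E \<beta> \<beta> = 0" using zero_on_nodes_cform[of \<beta> \<beta>] by auto
  then show False using root_norm[OF r] by simp
qed

lemma cform_pq_nonpos:
  assumes "\<And>k. p k \<ge> 0" "\<And>k. q k \<ge> 0" "\<And>k. p k * q k = 0"
  shows "cform n E p q \<le> 0"
  unfolding cform_def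
proof (intro sum_nonpos)
  fix j k
  show "p j * q k * cartan E j k \<le> 0"
  proof (cases "j = k")
    case True then show ?thesis using assms(3)[of j] by auto
  next
    case False
    then have "cartan E j k \<le> 0" by (simp add: cartan_def)
    moreover have "p j * q k \<ge> 0" using assms by simp
    ultimately show ?thesis by (simp add: mult_nonneg_nonpos)
  qed
qed

lemma root_dich: "\<beta> \<in> roots n E \<Longrightarrow> (\<forall>k. 0 \<le> \<beta> k) \<or> (\<forall>k. \<beta> k \<le> 0)"
proof -
  assume r: "\<beta> \<in> roots n E"
  define p where "p k = max (\<beta> k) 0" for k
  define q where "q k = max (- \<beta> k) 0" for k
  have b: "\<beta> = (\<lambda>k. p k - q k)" by (auto simp: p_def q_def)
  have pq: "cform n E p q \<le> 0"
    by (rule cform_pq_nonpos) (auto simp: p_def q_def)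
  have "cform n E \<beta> \<beta> = cform n E p p - cform n E p q - (cform n E q p - cform n E q q)"
    by (subst (1 2) b) (simp add: cform_diff1 cform_diff2)
  also have "cform n E q p = cform n E p q" by (rule cform_sym[OF diag])
  finally have eq: "cform n E \<beta> \<beta> = cform n E p p - 2 * cform n E p q + cform n E q q" by simp
  show ?thesis
  proof (rule ccontr)
    assume "\<not> ?thesis"
    then obtain k1 k2 where k: "\<beta> k1 < 0" "\<beta> k2 > 0" by (auto simp: not_le)
    then have "k1 \<in> nodes n" "k2 \<in> nodes n" using root_supp[OF r] by fastforce+
    then have "cform n E p p \<ge> 2" "cform n E q q \<ge> 2"
      using k cform_ge2[OF diag, of k2 p] cform_ge2[OF diag, of k1 q] by (auto simp: p_def q_def)
    then show False using eq pq root_norm[OF r] by linarith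
  qed
qed

lemma pos_roots_iff: "\<beta> \<in> pos_roots n E \<longleftrightarrow> \<beta> \<in> roots n E \<and> (\<forall>k. 0 \<le> \<beta> k)"
  by (simp add: pos_roots_def)

lemma root_pos_or_neg: "\<beta> \<in> roots n E \<Longrightarrow> \<beta> \<in> pos_roots n E \<or> (\<lambda>k. - \<beta> k) \<in> pos_roots n E"
  using root_dich root_neg by (fastforce simp: pos_roots_iff)

lemma pos_ht: "\<beta> \<in> pos_roots n E \<Longrightarrow> ht n \<beta> \<ge> 1"
proof -
  assume p: "\<beta> \<in> pos_roots n E"
  then obtain k where k: "k \<in> nodes n" "\<beta> k \<noteq> 0" using root_nz by (auto simp: pos_roots_iff)
  have nn: "\<And>k. 0 \<le> \<beta> k" using p by (simp add: pos_roots_iff)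
  have "\<beta> k \<le> ht n \<beta>" unfolding ht_def by (rule member_le_sum[OF k(1)]) (use nn in auto)
  then show ?thesis using k nn[of k] by linarith
qed

lemma pos_not_neg: "\<beta> \<in> pos_roots n E \<Longrightarrow> (\<lambda>k. - \<beta> k) \<notin> pos_roots n E"
proof
  assume p: "\<beta> \<in> pos_roots n E" and q: "(\<lambda>k. - \<beta> k) \<in> pos_roots n E"
  have "ht n (\<lambda>k. - \<beta> k) \<ge> 1" by (rule pos_ht[OF q])
  then show False using pos_ht[OF p] by (simp add: ht_neg)
qed

lemma root_ht_nz: "\<beta> \<in> roots n E \<Longrightarrow> ht n \<beta> \<noteq> 0"
  using root_pos_or_neg pos_ht ht_neg by fastforce

lemma pos_ht1:
  assumes p: "\<beta> \<in> pos_roots n E" and h: "ht n \<beta> = 1"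
  shows "\<exists>m\<in>nodes n. \<beta> = salpha m"
proof -
  have r: "\<beta> \<in> roots n E" and nn: "\<And>k. 0 \<le> \<beta> k" using p by (auto simp: pos_roots_iff)
  obtain k where k: "k \<in> nodes n" "\<beta> k \<noteq> 0" using root_nz[OF r] by auto
  have s: "ht n \<beta> = \<beta> k + (\<Sum>j\<in>nodes n - {k}. \<beta> j)"
    unfolding ht_def using k by (simp add: sum.remove)
  have s0: "(\<Sum>j\<in>nodes n - {k}. \<beta> j) \<ge> 0" using nn by (simp add: sum_nonneg)
  have bk: "\<beta> k = 1" using s s0 h k nn[of k] by linarith
  then have "(\<Sum>j\<in>nodes n - {k}. \<beta> j) = 0" using s h by simp
  then have z: "\<forall>j\<in>nodes n - {k}. \<beta> j = 0"
    using sum_nonneg_eq_0_iff[of "nodes n - {k}" \<beta>] nn by simp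
  have "\<beta> = salpha k"
  proof
    fix j show "\<beta> j = salpha k j"
      using z bk root_supp[OF r, of j] by (cases "j \<in> nodes n") (auto simp: salpha_def)
  qed
  then show ?thesis using k by blast
qed

lemma root_diff_nz: "\<beta> \<in> roots n E \<Longrightarrow> \<gamma> \<in> roots n E \<Longrightarrow> \<beta> \<noteq> \<gamma> \<Longrightarrow> \<exists>k\<in>nodes n. \<beta> k - \<gamma> k \<noteq> 0"
proof -
  assume r: "\<beta> \<in> roots n E" "\<gamma> \<in> roots n E" "\<beta> \<noteq> \<gamma>"
  then obtain k where k: "\<beta> k \<noteq> \<gamma> k" by auto
  have "k \<in> nodes n"
  proof (rule ccontr)
    assume "k \<notin> nodes n"
    then have "\<beta> k = 0" "\<gamma> k = 0" using root_supp r by auto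
    then show False using k by simp
  qed
  then show ?thesis using k by auto
qed

lemma root_prod_le1:
  assumes r: "\<beta> \<in> roots n E" "\<gamma> \<in> roots n E" "\<beta> \<noteq> \<gamma>"
  shows "cform n E \<beta> \<gamma> \<le> 1"
proof -
  obtain k where k: "k \<in> nodes n" "\<beta> k - \<gamma> k \<noteq> 0" using root_diff_nz[OF r] by auto
  have "cform n E (\<lambda>k. \<beta> k - \<gamma> k) (\<lambda>k. \<beta> k - \<gamma> k) \<ge> 2" using cform_ge2[OF diag, of k "\<lambda>k. \<beta> k - \<gamma> k"] k by simp
  moreover have "cform n E (\<lambda>k. \<beta> k - \<gamma> k) (\<lambda>k. \<beta> k - \<gamma> k) = 4 - 2 * cform n E \<beta> \<gamma>"
    using root_norm[OF r(1)] root_norm[OF r(2)] cform_sym[OF diag, of \<gamma> \<beta>]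
    by (simp add: cform_diff1 cform_diff2)
  ultimately show ?thesis by simp
qed

lemma root_prod_ge:
  assumes r: "\<beta> \<in> roots n E" "\<gamma> \<in> roots n E" "\<beta> \<noteq> (\<lambda>k. - \<gamma> k)"
  shows "cform n E \<beta> \<gamma> \<ge> -1"
proof -
  have "cform n E \<beta> (\<lambda>k. - \<gamma> k) \<le> 1" using root_prod_le1[OF r(1) root_neg[OF r(2)] r(3)] .
  then show ?thesis by (simp add: cform_neg2)
qed

lemma root_refl:
  assumes b: "\<beta> \<in> roots n E" and g: "\<gamma> \<in> roots n E"
  shows "(\<lambda>k. \<gamma> k - cform n E \<gamma> \<beta> * \<beta> k) \<in> roots n E"
proof -
  obtain w i where w: "w \<in> weyl n E" "i \<in> nodes n" "\<beta> = w (salpha i)" using b by (auto simp: roots_iff)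
  obtain v where v: "v \<in> weyl n E" "v \<circ> w = id" "w \<circ> v = id" using weyl_inv[OF diag w(1)] by blast
  have wv: "w (v x) = x" for x using v(3) by (metis comp_apply id_apply)
  have c: "cform n E (v \<gamma>) (salpha i) = cform n E \<gamma> \<beta>"
  proof -
    have "cform n E (v \<gamma>) (salpha i) = cform n E (w (v \<gamma>)) (w (salpha i))"
      by (rule weyl_cform[OF diag w(1), symmetric])
    then show ?thesis unfolding wv w(3)[symmetric] .
  qed
  have "w (srefl n E i (v \<gamma>)) = w (\<lambda>k. v \<gamma> k - cform n E \<gamma> \<beta> * salpha i k)"
    unfolding srefl_def c ..
  also have "\<dots> = (\<lambda>k. w (v \<gamma>) k - cform n E \<gamma> \<beta> * w (salpha i) k)"
    by (rule weyl_diff[OF diag w(1)])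
  also have "\<dots> = (\<lambda>k. \<gamma> k - cform n E \<gamma> \<beta> * \<beta> k)"
    unfolding wv w(3)[symmetric] ..
  finally have eq: "w (srefl n E i (v \<gamma>)) = (\<lambda>k. \<gamma> k - cform n E \<gamma> \<beta> * \<beta> k)" .
  moreover have "w (srefl n E i (v \<gamma>)) \<in> roots n E"
  proof -
    have "v \<gamma> \<in> roots n E" by (rule root_weyl[OF v(1) g])
    then have "srefl n E i (v \<gamma>) \<in> roots n E" by (rule root_srefl[OF w(2)])
    then show ?thesis by (rule root_weyl[OF w(1)])
  qed
  ultimately show ?thesis by (simp only: eq)
qed

lemma delta_root:
  assumes b1: "\<beta>1 \<in> roots n E" and b2: "\<beta>2 \<in> roots n E" and k: "k \<in> nodes n"
    and o: "cform n E \<beta>2 \<beta>1 = 0" and c1: "cform n E \<beta>1 (salpha k) = -1" and c2: "cform n E \<beta>2 (salpha k) = 1"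
  shows "(\<lambda>m. \<beta>2 m - \<beta>1 m - salpha k m) \<in> roots n E"
proof -
  let ?g = "srefl n E k \<beta>2"
  have g: "?g = (\<lambda>m. \<beta>2 m - salpha k m)" using c2 by (simp add: srefl_def)
  have gr: "?g \<in> roots n E" using root_srefl[OF k b2] .
  have "cform n E ?g \<beta>1 = 1"
    using o c1 cform_sym[OF diag, of "salpha k" \<beta>1] by (simp add: g cform_diff1)
  then have "(\<lambda>m. \<beta>2 m - salpha k m - \<beta>1 m) \<in> roots n E" using root_refl[OF b1 gr] by (simp add: g)
  moreover have "(\<lambda>m. \<beta>2 m - salpha k m - \<beta>1 m) = (\<lambda>m. \<beta>2 m - \<beta>1 m - salpha k m)" by (simp add: algebra_simps)
  ultimately show ?thesis by simp
qed

end

definition asc :: "nat \<Rightarrow> (nat \<Rightarrow> nat \<Rightarrow> bool) \<Rightarrow> (nat \<Rightarrow> int) set \<Rightarrow> nat \<Rightarrow> bool" where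
  "asc n E X i \<longleftrightarrow> (\<exists>\<beta>\<in>X. cform n E \<beta> (salpha i) = -1 \<and>
      (\<forall>\<gamma>\<in>X. cform n E \<gamma> (salpha i) = 1 \<longrightarrow> ht n \<beta> < ht n \<gamma>))"

lemma ex_min_on:
  fixes f :: "'a \<Rightarrow> int"
  assumes "finite A" "A \<noteq> {}"
  shows "\<exists>a\<in>A. \<forall>b\<in>A. f a \<le> f b"
proof -
  have "Min (f ` A) \<in> f ` A" using assms by (intro Min_in) auto
  then obtain a where a: "a \<in> A" "f a = Min (f ` A)" by auto
  have "\<forall>b\<in>A. f a \<le> f b" using assms a(2) by (auto intro: Min_le)
  then show ?thesis using a(1) by blast
qed

context
  fixes n :: nat and E :: "nat \<Rightarrow> nat \<Rightarrow> bool"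
  assumes diag: "sl_spherical n E"
begin

lemma finite_roots: "finite (roots n E)"
proof -
  have "roots n E = (\<lambda>(w, i). w (salpha i)) ` (weyl n E \<times> nodes n)"
    by (auto simp: roots_def)
  then show ?thesis using finite_W[OF diag] by simp
qed

lemma finite_pos: "finite (pos_roots n E)"
  using finite_roots by (rule rev_finite_subset) (auto simp: pos_roots_def)

lemma orth_finite: "orth_set n E X \<Longrightarrow> finite X"
  unfolding orth_set_def using finite_pos by (auto intro: finite_subset)

lemma orth_pos: "orth_set n E X \<Longrightarrow> \<beta> \<in> X \<Longrightarrow> \<beta> \<in> pos_roots n E"
  unfolding orth_set_def by auto

lemma orth_root: "orth_set n E X \<Longrightarrow> \<beta> \<in> X \<Longrightarrow> \<beta> \<in> roots n E"
  unfolding orth_set_def pos_roots_def by auto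

lemma orth_orth: "orth_set n E X \<Longrightarrow> \<beta> \<in> X \<Longrightarrow> \<gamma> \<in> X \<Longrightarrow> \<beta> \<noteq> \<gamma> \<Longrightarrow> cform n E \<beta> \<gamma> = 0"
  unfolding orth_set_def by auto

lemma alpha_pos: "i \<in> nodes n \<Longrightarrow> salpha i \<in> pos_roots n E"
  using alpha_root[OF diag] by (simp add: pos_roots_def salpha_def)

lemma pos_ne_neg: "\<beta> \<in> pos_roots n E \<Longrightarrow> \<gamma> \<in> pos_roots n E \<Longrightarrow> \<beta> \<noteq> (\<lambda>k. - \<gamma> k)"
  using pos_not_neg[OF diag] by auto

lemma pos_prod_cases:
  assumes "\<beta> \<in> pos_roots n E" "i \<in> nodes n" "\<beta> \<noteq> salpha i"
  shows "cform n E \<beta> (salpha i) = -1 \<or> cform n E \<beta> (salpha i) = 0 \<or> cform n E \<beta> (salpha i) = 1"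
proof -
  have r: "\<beta> \<in> roots n E" using assms by (simp add: pos_roots_def)
  have "cform n E \<beta> (salpha i) \<le> 1" using root_prod_le1[OF diag r alpha_root[OF diag assms(2)] assms(3)] .
  moreover have "cform n E \<beta> (salpha i) \<ge> -1"
    using root_prod_ge[OF diag r alpha_root[OF diag assms(2)] pos_ne_neg[OF assms(1) alpha_pos[OF assms(2)]]] .
  ultimately show ?thesis by auto
qed

lemma act_comp:
  assumes w: "w \<in> weyl n E" and u: "u \<in> weyl n E" and B: "B \<subseteq> roots n E"
  shows "act_set n E (w \<circ> u) B = act_set n E w (act_set n E u B)"
proof
  show "act_set n E (w \<circ> u) B \<subseteq> act_set n E w (act_set n E u B)"
  proof
    fix \<gamma> assume "\<gamma> \<in> act_set n E (w \<circ> u) B"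
    then obtain \<beta> where g: "\<gamma> \<in> pos_roots n E" "\<beta> \<in> B" "\<gamma> = w (u \<beta>) \<or> \<gamma> = (\<lambda>k. - w (u \<beta>) k)"
      by (auto simp: act_set_def)
    have ur: "u \<beta> \<in> roots n E" using root_weyl[OF diag u] B g(2) by auto
    show "\<gamma> \<in> act_set n E w (act_set n E u B)"
    proof (cases "u \<beta> \<in> pos_roots n E")
      case True
      then have "u \<beta> \<in> act_set n E u B" using g(2) by (auto simp: act_set_def)
      then show ?thesis using g by (auto simp: act_set_def)
    next
      case False
      then have "(\<lambda>k. - u \<beta> k) \<in> pos_roots n E" using root_pos_or_neg[OF diag ur] by auto
      then have "(\<lambda>k. - u \<beta> k) \<in> act_set n E u B" using g(2) by (auto simp: act_set_def)
      moreover have "w (\<lambda>k. - u \<beta> k) = (\<lambda>k. - w (u \<beta>) k)" by (rule weyl_neg[OF diag w])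
      ultimately show ?thesis using g unfolding act_set_def by auto
    qed
  qed
next
  show "act_set n E w (act_set n E u B) \<subseteq> act_set n E (w \<circ> u) B"
  proof
    fix \<gamma> assume "\<gamma> \<in> act_set n E w (act_set n E u B)"
    then obtain \<delta> \<beta> where g: "\<gamma> \<in> pos_roots n E" "\<beta> \<in> B" "\<gamma> = w \<delta> \<or> \<gamma> = (\<lambda>k. - w \<delta> k)"
      "\<delta> = u \<beta> \<or> \<delta> = (\<lambda>k. - u \<beta> k)"
      by (auto simp: act_set_def)
    have "w (\<lambda>k. - u \<beta> k) = (\<lambda>k. - w (u \<beta>) k)" by (rule weyl_neg[OF diag w])
    then have "\<gamma> = w (u \<beta>) \<or> \<gamma> = (\<lambda>k. - w (u \<beta>) k)" using g(3,4) by auto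
    then show "\<gamma> \<in> act_set n E (w \<circ> u) B" using g(1,2) by (auto simp: act_set_def)
  qed
qed

lemma act_id: "B \<subseteq> pos_roots n E \<Longrightarrow> act_set n E id B = B"
  unfolding act_set_def using pos_not_neg[OF diag] by fastforce

lemma act_orth:
  assumes B: "orth_set n E B" and w: "w \<in> weyl n E"
  shows "orth_set n E (act_set n E w B)"
  unfolding orth_set_def
proof (intro conjI ballI impI)
  show "act_set n E w B \<subseteq> pos_roots n E" by (auto simp: act_set_def)
next
  fix \<gamma> \<gamma>' assume g: "\<gamma> \<in> act_set n E w B" "\<gamma>' \<in> act_set n E w B" "\<gamma> \<noteq> \<gamma>'"
  obtain \<beta> where b: "\<beta> \<in> B" "\<gamma> = w \<beta> \<or> \<gamma> = (\<lambda>k. - w \<beta> k)" "\<gamma> \<in> pos_roots n E"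
    using g(1) by (auto simp: act_set_def)
  obtain \<beta>' where b': "\<beta>' \<in> B" "\<gamma>' = w \<beta>' \<or> \<gamma>' = (\<lambda>k. - w \<beta>' k)" "\<gamma>' \<in> pos_roots n E"
    using g(2) by (auto simp: act_set_def)
  have "\<beta> \<noteq> \<beta>'"
  proof
    assume "\<beta> = \<beta>'"
    then have "\<gamma>' = (\<lambda>k. - \<gamma> k) \<or> \<gamma> = (\<lambda>k. - \<gamma>' k)" using b(2) b'(2) g(3) by auto
    then show False using pos_ne_neg[OF b(3) b'(3)] pos_ne_neg[OF b'(3) b(3)] by auto
  qed
  then have z: "cform n E (w \<beta>) (w \<beta>') = 0" using orth_orth[OF B b(1) b'(1)] weyl_cform[OF diag w] by simp
  show "cform n E \<gamma> \<gamma>' = 0" using b(2) b'(2) z by (auto simp: cform_neg1 cform_neg2)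
qed

lemma srefl_pos:
  assumes b: "\<beta> \<in> pos_roots n E" and i: "i \<in> nodes n" and ne: "\<beta> \<noteq> salpha i"
  shows "srefl n E i \<beta> \<in> pos_roots n E"
proof -
  have r: "\<beta> \<in> roots n E" and nn: "\<And>k. 0 \<le> \<beta> k" using b by (auto simp: pos_roots_def)
  have rr: "srefl n E i \<beta> \<in> roots n E" using root_srefl[OF diag i r] .
  have other: "srefl n E i \<beta> k = \<beta> k" if "k \<noteq> i" for k using that by (simp add: srefl_apply[OF diag] salpha_def)
  show ?thesis
  proof (rule ccontr)
    assume np: "srefl n E i \<beta> \<notin> pos_roots n E"
    then have "\<forall>k. srefl n E i \<beta> k \<le> 0" using root_dich[OF diag rr] rr by (auto simp: pos_roots_def)
    then have z: "\<beta> k = 0" if "k \<noteq> i" for k using other[OF that] nn[of k] that by (metis order_antisym)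
    have be: "\<beta> = (\<lambda>k. \<beta> i * salpha i k)"
      by (rule ext) (auto simp: salpha_def z)
    have "cform n E \<beta> \<beta> = \<beta> i * \<beta> i * 2"
      by (subst (1 2) be) (simp add: cform_scale1 cform_scale2 cform_alpha_self[OF diag i])
    then have "\<beta> i * \<beta> i = 1" using root_norm[OF diag r] by simp
    then have "\<beta> i = 1" using nn[of i] zmult_eq_1_iff[of "\<beta> i" "\<beta> i"] by auto
    then have "\<beta> = salpha i" using be by simp
    then show False using ne by simp
  qed
qed

lemma srefl_c: "i \<in> nodes n \<Longrightarrow> srefl n E i \<beta> = (\<lambda>k. \<beta> k - cform n E \<beta> (salpha i) * salpha i k)"
  by (simp add: srefl_def)

lemma srefl_prod: "i \<in> nodes n \<Longrightarrow> cform n E (srefl n E i \<beta>) (salpha i) = - cform n E \<beta> (salpha i)"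
  by (rule cform_srefl_alpha[OF diag])

lemma srefl_ht: "i \<in> nodes n \<Longrightarrow> ht n (srefl n E i \<beta>) = ht n \<beta> - cform n E \<beta> (salpha i)"
  by (rule ht_srefl[OF diag])

lemma srefl_fix: "cform n E \<beta> (salpha i) = 0 \<Longrightarrow> srefl n E i \<beta> = \<beta>"
  by (simp add: srefl_def)

lemma act_alpha_in:
  assumes X: "orth_set n E X" and i: "i \<in> nodes n" and a: "salpha i \<in> X"
  shows "act_set n E (srefl n E i) X = X"
proof -
  have fix0: "\<beta> \<in> X \<Longrightarrow> \<beta> \<noteq> salpha i \<Longrightarrow> srefl n E i \<beta> = \<beta>" for \<beta>
    using orth_orth[OF X _ a] by (intro srefl_fix) auto
  have sa: "srefl n E i (salpha i) = (\<lambda>k. - salpha i k)" by (rule srefl_alpha_self[OF diag i])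
  show ?thesis
  proof
    show "act_set n E (srefl n E i) X \<subseteq> X"
    proof
      fix \<gamma> assume "\<gamma> \<in> act_set n E (srefl n E i) X"
      then obtain \<beta> where b: "\<gamma> \<in> pos_roots n E" "\<beta> \<in> X" "\<gamma> = srefl n E i \<beta> \<or> \<gamma> = (\<lambda>k. - srefl n E i \<beta> k)"
        by (auto simp: act_set_def)
      show "\<gamma> \<in> X"
      proof (cases "\<beta> = salpha i")
        case True
        have nn: "(\<lambda>k. - (- salpha i k)) = salpha i" by simp
        have "\<gamma> = (\<lambda>k. - salpha i k) \<or> \<gamma> = salpha i" using b(3) unfolding True sa nn by simp
        moreover have "(\<lambda>k. - salpha i k) \<notin> pos_roots n E" by (rule pos_not_neg[OF diag alpha_pos[OF i]])
        ultimately show ?thesis using b(1) a by auto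
      next
        case False
        have "\<gamma> = \<beta> \<or> \<gamma> = (\<lambda>k. - \<beta> k)" using b(3) fix0[OF b(2) False] by simp
        moreover have "(\<lambda>k. - \<beta> k) \<notin> pos_roots n E" by (rule pos_not_neg[OF diag orth_pos[OF X b(2)]])
        ultimately show ?thesis using b(1) b(2) by auto
      qed
    qed
  next
    show "X \<subseteq> act_set n E (srefl n E i) X"
    proof
      fix \<beta> assume b: "\<beta> \<in> X"
      show "\<beta> \<in> act_set n E (srefl n E i) X"
      proof (cases "\<beta> = salpha i")
        case True
        have "\<beta> = (\<lambda>k. - srefl n E i \<beta> k)" unfolding True sa by simp
        then show ?thesis using b orth_pos[OF X b] unfolding act_set_def by blast
      next
        case False
        have "\<beta> = srefl n E i \<beta>" using fix0[OF b False] by simp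
        then show ?thesis using b orth_pos[OF X b] unfolding act_set_def by blast
      qed
    qed
  qed
qed

lemma act_alpha_notin:
  assumes X: "orth_set n E X" and i: "i \<in> nodes n" and a: "salpha i \<notin> X"
  shows "act_set n E (srefl n E i) X = srefl n E i ` X"
proof
  show "act_set n E (srefl n E i) X \<subseteq> srefl n E i ` X"
  proof
    fix \<gamma> assume "\<gamma> \<in> act_set n E (srefl n E i) X"
    then obtain \<beta> where b: "\<gamma> \<in> pos_roots n E" "\<beta> \<in> X" "\<gamma> = srefl n E i \<beta> \<or> \<gamma> = (\<lambda>k. - srefl n E i \<beta> k)"
      by (auto simp: act_set_def)
    have p: "srefl n E i \<beta> \<in> pos_roots n E" using srefl_pos[OF orth_pos[OF X b(2)] i] a b(2) by auto
    then show "\<gamma> \<in> srefl n E i ` X" using b pos_not_neg[OF diag p] by auto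
  qed
next
  show "srefl n E i ` X \<subseteq> act_set n E (srefl n E i) X"
  proof
    fix \<gamma> assume "\<gamma> \<in> srefl n E i ` X"
    then obtain \<beta> where b: "\<beta> \<in> X" "\<gamma> = srefl n E i \<beta>" by auto
    have p: "srefl n E i \<beta> \<in> pos_roots n E" using srefl_pos[OF orth_pos[OF X b(1)] i] a b(1) by auto
    then show "\<gamma> \<in> act_set n E (srefl n E i) X" using b unfolding act_set_def by auto
  qed
qed

lemma act_invol:
  assumes X: "orth_set n E X" and i: "i \<in> nodes n"
  shows "act_set n E (srefl n E i) (act_set n E (srefl n E i) X) = X"
proof -
  have "act_set n E (srefl n E i) (act_set n E (srefl n E i) X) = act_set n E (srefl n E i \<circ> srefl n E i) X"
    using act_comp[OF srefl_weyl[OF i] srefl_weyl[OF i], of X] X by (auto simp: orth_set_def pos_roots_def)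
  also have "\<dots> = X" using act_id[of X] X by (simp add: srefl_comp_invol[OF diag i] orth_set_def)
  finally show ?thesis .
qed

end

context
  fixes n :: nat and E :: "nat \<Rightarrow> nat \<Rightarrow> bool"
  assumes diag: "sl_spherical n E"
begin

lemma c_srefl: "k \<in> nodes n \<Longrightarrow> l \<in> nodes n \<Longrightarrow>
  cform n E (srefl n E k \<beta>) (salpha l) = cform n E \<beta> (salpha l) - cform n E \<beta> (salpha k) * cartan E k l"
  by (simp add: cform_srefl1[OF diag] cform_alpha_alpha)

lemma tie:
  assumes X: "orth_set n E X" and i: "i \<in> nodes n" and b: "\<beta>1 \<in> X" "\<beta>2 \<in> X"
    and c1: "cform n E \<beta>1 (salpha i) = -1" and c2: "cform n E \<beta>2 (salpha i) = 1"
  shows "ht n \<beta>2 \<noteq> ht n \<beta>1 + 1"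
proof
  assume h: "ht n \<beta>2 = ht n \<beta>1 + 1"
  have ne: "\<beta>2 \<noteq> \<beta>1" using c1 c2 by auto
  have o: "cform n E \<beta>2 \<beta>1 = 0" using orth_orth[OF diag X b(2) b(1) ne] .
  have r: "(\<lambda>m. \<beta>2 m - \<beta>1 m - salpha i m) \<in> roots n E"
    using delta_root[OF diag orth_root[OF diag X b(1)] orth_root[OF diag X b(2)] i o c1 c2] .
  have "ht n (\<lambda>m. \<beta>2 m - \<beta>1 m - salpha i m) = 0" using h i by (simp add: ht_diff ht_alpha)
  then show False using root_ht_nz[OF diag r] by simp
qed

lemma ht1_contra:
  assumes r: "\<delta> \<in> roots n E" and h: "ht n \<delta> = 1" and l: "l \<in> nodes n" and c: "cform n E \<delta> (salpha l) = 1"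
  shows False
proof -
  have "\<delta> \<in> pos_roots n E"
  proof (rule ccontr)
    assume "\<delta> \<notin> pos_roots n E"
    then have "(\<lambda>k. - \<delta> k) \<in> pos_roots n E" using root_pos_or_neg[OF diag r] by auto
    then have "ht n (\<lambda>k. - \<delta> k) \<ge> 1" by (rule pos_ht[OF diag])
    then show False using h by (simp add: ht_neg)
  qed
  then obtain m where m: "m \<in> nodes n" "\<delta> = salpha m" using pos_ht1[OF diag _ h] by blast
  then have "cartan E m l = 1" using c l by (simp add: cform_alpha_alpha)
  then show False by (simp add: cartan_ne1)
qed

lemma prod2:
  assumes r: "\<delta> \<in> roots n E" and l: "l \<in> nodes n" and c: "cform n E \<delta> (salpha l) = 2"
  shows "\<delta> = salpha l"
  using root_prod_le1[OF diag r alpha_root[OF diag l]] c by fastforce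

lemma asc_notin:
  assumes X: "orth_set n E X" and i: "i \<in> nodes n" and a: "asc n E X i"
  shows "salpha i \<notin> X"
proof
  assume ai: "salpha i \<in> X"
  obtain \<beta> where b: "\<beta> \<in> X" "cform n E \<beta> (salpha i) = -1" using a by (auto simp: asc_def)
  show False
  proof (cases "\<beta> = salpha i")
    case True then show ?thesis using b cform_alpha_self[OF diag i] by simp
  next
    case False then show ?thesis using orth_orth[OF diag X b(1) ai] b by simp
  qed
qed

lemma prod_cases_X:
  assumes X: "orth_set n E X" and i: "i \<in> nodes n" and a: "salpha i \<notin> X" and b: "\<beta> \<in> X"
  shows "cform n E \<beta> (salpha i) = -1 \<or> cform n E \<beta> (salpha i) = 0 \<or> cform n E \<beta> (salpha i) = 1"
  using pos_prod_cases[OF diag orth_pos[OF diag X b] i] a b by auto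

lemma moved_prod:
  assumes X: "orth_set n E X" and i: "i \<in> nodes n" and a: "salpha i \<notin> X" and b: "\<beta> \<in> X"
    and nz: "cform n E \<beta> (salpha i) \<noteq> 0"
  shows "cform n E \<beta> (srefl n E i \<beta>) = 1" "srefl n E i \<beta> \<noteq> \<beta>"
proof -
  let ?c = "cform n E \<beta> (salpha i)"
  have cc: "?c * ?c = 1" using prod_cases_X[OF X i a b] nz by auto
  have "cform n E \<beta> (srefl n E i \<beta>) = cform n E (srefl n E i \<beta>) \<beta>" by (rule cform_sym[OF diag])
  also have "\<dots> = 2 - ?c * ?c"
    using root_norm[OF diag orth_root[OF diag X b]] cform_sym[OF diag, of "salpha i" \<beta>]
    by (simp add: cform_srefl1[OF diag])
  finally show "cform n E \<beta> (srefl n E i \<beta>) = 1" using cc by simp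
  show "srefl n E i \<beta> \<noteq> \<beta>"
  proof
    assume "srefl n E i \<beta> = \<beta>"
    then have "srefl n E i \<beta> i = \<beta> i" by simp
    then show False using nz by (simp add: srefl_apply[OF diag] salpha_def)
  qed
qed

lemma diff_sets:
  assumes X: "orth_set n E X" and i: "i \<in> nodes n" and a: "salpha i \<notin> X"
  shows "X - act_set n E (srefl n E i) X = {\<beta>\<in>X. cform n E \<beta> (salpha i) \<noteq> 0}"
    "act_set n E (srefl n E i) X - X = srefl n E i ` {\<beta>\<in>X. cform n E \<beta> (salpha i) \<noteq> 0}"
proof -
  have R: "act_set n E (srefl n E i) X = srefl n E i ` X" by (rule act_alpha_notin[OF diag X i a])
  have inv: "srefl n E i (srefl n E i \<beta>) = \<beta>" for \<beta> by (rule srefl_invol[OF diag i])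
  have notin1: "srefl n E i \<beta> \<notin> X" if b: "\<beta> \<in> X" "cform n E \<beta> (salpha i) \<noteq> 0" for \<beta>
  proof
    assume "srefl n E i \<beta> \<in> X"
    then have "cform n E \<beta> (srefl n E i \<beta>) = 0"
      using orth_orth[OF diag X b(1)] moved_prod(2)[OF X i a b] by metis
    then show False using moved_prod(1)[OF X i a b] by simp
  qed
  have notin2: "\<beta> \<notin> srefl n E i ` X" if b: "\<beta> \<in> X" "cform n E \<beta> (salpha i) \<noteq> 0" for \<beta>
  proof
    assume "\<beta> \<in> srefl n E i ` X"
    then obtain \<beta>' where "\<beta>' \<in> X" "\<beta> = srefl n E i \<beta>'" by auto
    then have "srefl n E i \<beta> \<in> X" using inv by simp
    then show False using notin1[OF b] by simp
  qed
  have fixed: "\<beta> \<in> srefl n E i ` X" if b: "\<beta> \<in> X" "cform n E \<beta> (salpha i) = 0" for \<beta>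
    using b srefl_fix[OF diag b(2)] by (metis image_eqI)
  show "X - act_set n E (srefl n E i) X = {\<beta>\<in>X. cform n E \<beta> (salpha i) \<noteq> 0}"
    unfolding R using notin2 fixed by blast
  show "act_set n E (srefl n E i) X - X = srefl n E i ` {\<beta>\<in>X. cform n E \<beta> (salpha i) \<noteq> 0}"
  proof
    show "act_set n E (srefl n E i) X - X \<subseteq> srefl n E i ` {\<beta>\<in>X. cform n E \<beta> (salpha i) \<noteq> 0}"
    proof
      fix \<gamma> assume "\<gamma> \<in> act_set n E (srefl n E i) X - X"
      then obtain \<beta> where b: "\<beta> \<in> X" "\<gamma> = srefl n E i \<beta>" "\<gamma> \<notin> X" unfolding R by auto
      then have "cform n E \<beta> (salpha i) \<noteq> 0" using srefl_fix[OF diag] by auto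
      then show "\<gamma> \<in> srefl n E i ` {\<beta>\<in>X. cform n E \<beta> (salpha i) \<noteq> 0}" using b by auto
    qed
  next
    show "srefl n E i ` {\<beta>\<in>X. cform n E \<beta> (salpha i) \<noteq> 0} \<subseteq> act_set n E (srefl n E i) X - X"
      unfolding R using notin1 by auto
  qed
qed


lemma prec_iff:
  assumes X: "orth_set n E X" and i: "i \<in> nodes n"
  shows "prec n X (act_set n E (srefl n E i) X) \<longleftrightarrow> asc n E X i"
proof (cases "salpha i \<in> X")
  case True
  have "act_set n E (srefl n E i) X = X" by (rule act_alpha_in[OF diag X i True])
  moreover have "\<not> asc n E X i" using asc_notin[OF X i] True by blast
  ultimately show ?thesis by (simp add: prec_def)
next
  case False
  let ?c = "\<lambda>\<beta>. cform n E \<beta> (salpha i)"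
  let ?R = "act_set n E (srefl n E i) X"
  define S where "S = {\<beta>\<in>X. cform n E \<beta> (salpha i) \<noteq> 0}"
  have d1: "X - ?R = S" using diff_sets(1)[OF X i False] by (simp add: S_def)
  have d2: "?R - X = srefl n E i ` S" using diff_sets(2)[OF X i False] by (simp add: S_def)
  have fS: "finite S" using orth_finite[OF diag X] by (simp add: S_def)
  have cS: "?c \<beta> = -1 \<or> ?c \<beta> = 1" if "\<beta> \<in> S" for \<beta>
    using prod_cases_X[OF X i False] that by (auto simp: S_def)
  have htR: "ht n ` (?R - X) = (\<lambda>\<beta>. ht n \<beta> - ?c \<beta>) ` S"
  proof -
    have "ht n ` (?R - X) = (\<lambda>\<beta>. ht n (srefl n E i \<beta>)) ` S" unfolding d2 by (simp add: image_image)
    also have "\<dots> = (\<lambda>\<beta>. ht n \<beta> - ?c \<beta>) ` S" by (simp add: srefl_ht[OF diag i])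
    finally show ?thesis .
  qed
  show ?thesis
  proof (cases "S = {}")
    case True
    have "X = ?R" using d1 d2 True by blast
    moreover have "\<not> asc n E X i" using True unfolding asc_def S_def by force
    ultimately show ?thesis by (simp add: prec_def)
  next
    case Sne: False
    obtain bs where bs: "bs \<in> S" "\<forall>b\<in>S. ht n bs \<le> ht n b" using ex_min_on[OF fS Sne] by blast
    have minS: "Min (ht n ` S) = ht n bs" by (rule Min_eqI) (use fS bs in auto)
    have ne: "X \<noteq> ?R" using bs d1 by auto
    show ?thesis
    proof
      assume p: "prec n X ?R"
      show "asc n E X i"
      proof (rule ccontr)
        assume na: "\<not> asc n E X i"
        have "\<exists>\<gamma>\<in>S. ht n \<gamma> - ?c \<gamma> \<le> ht n bs"
        proof (cases "?c bs = 1")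
          case True then show ?thesis using bs by force
        next
          case False
          then have cb: "?c bs = -1" using cS bs by auto
          have bsX: "bs \<in> X" using bs by (simp add: S_def)
          obtain \<gamma> where g: "\<gamma> \<in> X" "?c \<gamma> = 1" "ht n \<gamma> \<le> ht n bs"
            using na bsX cb unfolding asc_def by force
          then show ?thesis by (intro bexI[of _ \<gamma>]) (auto simp: S_def)
        qed
        then obtain \<gamma> where g: "\<gamma> \<in> S" "ht n \<gamma> - ?c \<gamma> \<le> ht n bs" by blast
        have "Min ((\<lambda>\<beta>. ht n \<beta> - ?c \<beta>) ` S) \<le> ht n \<gamma> - ?c \<gamma>"
          using fS g(1) by (intro Min_le) auto
        then have "Min ((\<lambda>\<beta>. ht n \<beta> - ?c \<beta>) ` S) \<le> ht n bs" using g(2) by simp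
        moreover have "Min (ht n ` S) < Min ((\<lambda>\<beta>. ht n \<beta> - ?c \<beta>) ` S)"
          using p unfolding prec_def d1 htR by simp
        ultimately show False unfolding minS by simp
      qed
    next
      assume a: "asc n E X i"
      obtain b0 where b0: "b0 \<in> X" "?c b0 = -1" "\<forall>\<gamma>\<in>X. ?c \<gamma> = 1 \<longrightarrow> ht n b0 < ht n \<gamma>"
        using a unfolding asc_def by blast
      have b0S: "b0 \<in> S" using b0 by (simp add: S_def)
      have bsX: "bs \<in> X" using bs by (simp add: S_def)
      have cbs: "?c bs = -1"
      proof (rule ccontr)
        assume "?c bs \<noteq> -1"
        then have "?c bs = 1" using cS bs by auto
        then have "ht n b0 < ht n bs" using b0(3) bsX by auto
        moreover have "ht n bs \<le> ht n b0" using bs b0S by auto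
        ultimately show False by simp
      qed
      have gt: "\<forall>\<gamma>\<in>S. ht n bs < ht n \<gamma> - ?c \<gamma>"
      proof
        fix \<gamma> assume gS: "\<gamma> \<in> S"
        have gX: "\<gamma> \<in> X" using gS by (simp add: S_def)
        show "ht n bs < ht n \<gamma> - ?c \<gamma>"
        proof (cases "?c \<gamma> = 1")
          case True
          have "ht n b0 < ht n \<gamma>" using b0(3) gX True by auto
          moreover have "ht n bs \<le> ht n b0" using bs b0S by auto
          moreover have "ht n \<gamma> \<noteq> ht n bs + 1" using tie[OF X i bsX gX cbs True] .
          ultimately show ?thesis using True by simp
        next
          case False
          then have "?c \<gamma> = -1" using cS gS by auto
          then show ?thesis using bs gS by auto
        qed
      qed
      have "ht n bs < Min ((\<lambda>\<beta>. ht n \<beta> - ?c \<beta>) ` S)" using gt fS Sne by simp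
      then show "prec n X ?R" unfolding prec_def d1 htR minS using ne by simp
    qed
  qed
qed

lemma asc_trich:
  assumes X: "orth_set n E X" and i: "i \<in> nodes n" and ne: "act_set n E (srefl n E i) X \<noteq> X"
    and na: "\<not> asc n E X i"
  shows "asc n E (act_set n E (srefl n E i) X) i"
proof -
  let ?c = "\<lambda>\<beta>. cform n E \<beta> (salpha i)"
  have a: "salpha i \<notin> X" using act_alpha_in[OF diag X i] ne by blast
  have R: "act_set n E (srefl n E i) X = srefl n E i ` X" by (rule act_alpha_notin[OF diag X i a])
  define SM where "SM = {\<beta>\<in>X. cform n E \<beta> (salpha i) = 1}"
  have fSM: "finite SM" using orth_finite[OF diag X] by (simp add: SM_def)
  have SMne: "SM \<noteq> {}"
  proof
    assume e: "SM = {}"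
    have "{\<beta>\<in>X. ?c \<beta> \<noteq> 0} \<noteq> {}"
    proof
      assume "{\<beta>\<in>X. ?c \<beta> \<noteq> 0} = {}"
      then have "X - act_set n E (srefl n E i) X = {}" "act_set n E (srefl n E i) X - X = {}"
        using diff_sets[OF X i a] by auto
      then show False using ne by blast
    qed
    then obtain \<beta> where b: "\<beta> \<in> X" "?c \<beta> \<noteq> 0" by blast
    then have "?c \<beta> = -1" using prod_cases_X[OF X i a b(1)] e by (auto simp: SM_def)
    then have "asc n E X i" unfolding asc_def using b(1) e by (auto simp: SM_def)
    then show False using na by simp
  qed
  obtain g where g: "g \<in> SM" "\<forall>b\<in>SM. ht n g \<le> ht n b" using ex_min_on[OF fSM SMne] by blast
  have gX: "g \<in> X" "?c g = 1" using g(1) by (auto simp: SM_def)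
  show ?thesis unfolding asc_def R
  proof (intro bexI[of _ "srefl n E i g"] conjI ballI impI)
    show "srefl n E i g \<in> srefl n E i ` X" using gX by simp
    show "?c (srefl n E i g) = -1" using gX srefl_prod[OF diag i, of g] by simp
  next
    fix d assume d: "d \<in> srefl n E i ` X" "?c d = 1"
    then obtain \<delta> where dd: "\<delta> \<in> X" "d = srefl n E i \<delta>" by auto
    have cd: "?c \<delta> = -1" using d(2) dd srefl_prod[OF diag i, of \<delta>] by simp
    obtain \<gamma> where gg: "\<gamma> \<in> X" "?c \<gamma> = 1" "ht n \<gamma> \<le> ht n \<delta>"
      using na dd(1) cd unfolding asc_def by force
    have "ht n g \<le> ht n \<gamma>" using g(2) gg by (auto simp: SM_def)
    then show "ht n (srefl n E i g) < ht n d"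
      using gg dd cd gX by (simp add: srefl_ht[OF diag i])
  qed
qed

lemma act_srefl_orth: "orth_set n E X \<Longrightarrow> i \<in> nodes n \<Longrightarrow> orth_set n E (act_set n E (srefl n E i) X)"
  using act_orth[OF diag _ srefl_weyl] by blast

lemma prec_trich:
  assumes X: "orth_set n E X" and i: "i \<in> nodes n" and ne: "act_set n E (srefl n E i) X \<noteq> X"
  shows "prec n X (act_set n E (srefl n E i) X) \<or> prec n (act_set n E (srefl n E i) X) X"
proof (cases "asc n E X i")
  case True then show ?thesis using prec_iff[OF X i] by simp
next
  case False
  have "asc n E (act_set n E (srefl n E i) X) i" by (rule asc_trich[OF X i ne False])
  then have "prec n (act_set n E (srefl n E i) X) (act_set n E (srefl n E i) (act_set n E (srefl n E i) X))"
    using prec_iff[OF act_srefl_orth[OF X i] i] by simp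
  then show ?thesis using act_invol[OF diag X i] by simp
qed


lemma cartan_adj: "E i j \<Longrightarrow> cartan E i j = -1"
  using E_irr[OF diag] by (auto simp: cartan_def)

lemma cartan_nadj: "i \<noteq> j \<Longrightarrow> \<not> E i j \<Longrightarrow> cartan E i j = 0"
  by (simp add: cartan_def)

lemma diamond_comm:
  assumes X: "orth_set n E X" and i: "i \<in> nodes n" and j: "j \<in> nodes n" and ij: "i \<noteq> j" and nE: "\<not> E i j"
    and ai: "asc n E X i" and aj: "asc n E X j"
    and ne: "act_set n E (srefl n E i) X \<noteq> act_set n E (srefl n E j) X"
    and adm: "\<forall>\<gamma>. \<gamma> \<in> act_set n E (srefl n E i) X \<and> (\<lambda>k. \<gamma> k - salpha i k + salpha j k) \<in> act_set n E (srefl n E i) X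
       \<longrightarrow> act_set n E (srefl n E i) (act_set n E (srefl n E i) X) = act_set n E (srefl n E j) (act_set n E (srefl n E i) X)"
  shows "asc n E (act_set n E (srefl n E j) X) i"
proof -
  let ?x = "\<lambda>\<beta>. cform n E \<beta> (salpha i)"
  let ?y = "\<lambda>\<beta>. cform n E \<beta> (salpha j)"
  have cij: "cartan E i j = 0" "cartan E j i = 0" using cartan_nadj[OF ij nE] cartan_sym[OF diag, of i j] by auto
  have ani: "salpha i \<notin> X" by (rule asc_notin[OF X i ai])
  have anj: "salpha j \<notin> X" by (rule asc_notin[OF X j aj])
  have RJ: "act_set n E (srefl n E j) X = srefl n E j ` X" by (rule act_alpha_notin[OF diag X j anj])
  have RI: "act_set n E (srefl n E i) X = srefl n E i ` X" by (rule act_alpha_notin[OF diag X i ani])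
  obtain b1 where b1: "b1 \<in> X" "?x b1 = -1" "\<forall>\<gamma>\<in>X. ?x \<gamma> = 1 \<longrightarrow> ht n b1 < ht n \<gamma>"
    using ai unfolding asc_def by blast
  have cx: "?x (srefl n E j \<beta>) = ?x \<beta>" for \<beta> using c_srefl[OF j i, of \<beta>] cij by simp
  show ?thesis unfolding asc_def RJ
  proof (intro bexI[of _ "srefl n E j b1"] conjI ballI impI)
    show "srefl n E j b1 \<in> srefl n E j ` X" using b1 by simp
    show "?x (srefl n E j b1) = -1" using cx b1 by simp
  next
    fix d assume d: "d \<in> srefl n E j ` X" "?x d = 1"
    then obtain \<gamma> where g: "\<gamma> \<in> X" "d = srefl n E j \<gamma>" by auto
    have xg: "?x \<gamma> = 1" using d(2) g cx by simp
    have h1: "ht n b1 < ht n \<gamma>" using b1(3) g(1) xg by auto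
    have h2: "ht n \<gamma> \<noteq> ht n b1 + 1" by (rule tie[OF X i b1(1) g(1) b1(2) xg])
    have yb: "?y b1 = -1 \<or> ?y b1 = 0 \<or> ?y b1 = 1" by (rule prod_cases_X[OF X j anj b1(1)])
    have yg: "?y \<gamma> = -1 \<or> ?y \<gamma> = 0 \<or> ?y \<gamma> = 1" by (rule prod_cases_X[OF X j anj g(1)])
    show "ht n (srefl n E j b1) < ht n d"
    proof (rule ccontr)
      assume "\<not> ht n (srefl n E j b1) < ht n d"
      then have "ht n b1 - ?y b1 \<ge> ht n \<gamma> - ?y \<gamma>" using g by (simp add: srefl_ht[OF diag j])
      then have bad: "?y \<gamma> = 1" "?y b1 = -1" "ht n \<gamma> = ht n b1 + 2" using h1 h2 yb yg by auto
      have gb: "\<gamma> \<noteq> b1" using xg b1(2) by auto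
      have o: "cform n E \<gamma> b1 = 0" by (rule orth_orth[OF diag X g(1) b1(1) gb])
      let ?\<delta> = "\<lambda>m. \<gamma> m - b1 m - salpha i m"
      have dr: "?\<delta> \<in> roots n E"
        by (rule delta_root[OF diag orth_root[OF diag X b1(1)] orth_root[OF diag X g(1)] i o b1(2) xg])
      have "?y ?\<delta> = 2" using bad cij i j by (simp add: cform_diff1 cform_alpha_alpha)
      then have de: "?\<delta> = salpha j" by (rule prod2[OF dr j])
      have geq: "\<gamma> m = b1 m + salpha i m + salpha j m" for m using fun_cong[OF de, of m] by simp
      have s1: "srefl n E i b1 = (\<lambda>k. b1 k + salpha i k)" using b1(2) by (simp add: srefl_def)
      have s2: "srefl n E i \<gamma> = (\<lambda>k. b1 k + salpha j k)" using xg geq by (simp add: srefl_def)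
      have in1: "srefl n E i b1 \<in> act_set n E (srefl n E i) X" unfolding RI using b1 by simp
      have in2: "(\<lambda>k. srefl n E i b1 k - salpha i k + salpha j k) \<in> act_set n E (srefl n E i) X"
      proof -
        have "(\<lambda>k. srefl n E i b1 k - salpha i k + salpha j k) = srefl n E i \<gamma>" unfolding s1 s2 by simp
        then show ?thesis unfolding RI using g by simp
      qed
      have eq: "act_set n E (srefl n E i) (act_set n E (srefl n E i) X) = act_set n E (srefl n E j) (act_set n E (srefl n E i) X)"
        using adm in1 in2 by blast
      then have "X = act_set n E (srefl n E j) (act_set n E (srefl n E i) X)" using act_invol[OF diag X i] by simp
      then have "act_set n E (srefl n E j) X = act_set n E (srefl n E i) X"
        using act_invol[OF diag act_srefl_orth[OF X i] j] by simp
      then show False using ne by simp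
    qed
  qed
qed


lemma diamond_braid:
  assumes X: "orth_set n E X" and i: "i \<in> nodes n" and j: "j \<in> nodes n" and Eij: "E i j"
    and ai: "asc n E X i" and aj: "asc n E X j"
  shows "asc n E (act_set n E (srefl n E j) X) i"
    "asc n E (act_set n E (srefl n E i) (act_set n E (srefl n E j) X)) j"
proof -
  let ?x = "\<lambda>\<beta>. cform n E \<beta> (salpha i)"
  let ?y = "\<lambda>\<beta>. cform n E \<beta> (salpha j)"
  have cij: "cartan E i j = -1" "cartan E j i = -1"
    using cartan_adj[OF Eij] cartan_sym[OF diag, of i j] by auto
  have ani: "salpha i \<notin> X" by (rule asc_notin[OF X i ai])
  have anj: "salpha j \<notin> X" by (rule asc_notin[OF X j aj])
  have RJ: "act_set n E (srefl n E j) X = srefl n E j ` X" by (rule act_alpha_notin[OF diag X j anj])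
  obtain bi where bi: "bi \<in> X" "?x bi = -1" "\<forall>\<gamma>\<in>X. ?x \<gamma> = 1 \<longrightarrow> ht n bi < ht n \<gamma>"
    using ai unfolding asc_def by blast
  obtain bj where bj: "bj \<in> X" "?y bj = -1" "\<forall>\<gamma>\<in>X. ?y \<gamma> = 1 \<longrightarrow> ht n bj < ht n \<gamma>"
    using aj unfolding asc_def by blast
  have F10: "ht n \<gamma> \<ge> ht n bi + 2" if "\<gamma> \<in> X" "?x \<gamma> = 1" for \<gamma>
    using bi(3) that tie[OF X i bi(1) that(1) bi(2) that(2)] by fastforce
  have F01: "ht n \<gamma> \<ge> ht n bj + 2" if "\<gamma> \<in> X" "?y \<gamma> = 1" for \<gamma>
    using bj(3) that tie[OF X j bj(1) that(1) bj(2) that(2)] by fastforce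
  have rx: "?x \<beta> = -1 \<or> ?x \<beta> = 0 \<or> ?x \<beta> = 1" if "\<beta> \<in> X" for \<beta> by (rule prod_cases_X[OF X i ani that])
  have ry: "?y \<beta> = -1 \<or> ?y \<beta> = 0 \<or> ?y \<beta> = 1" if "\<beta> \<in> X" for \<beta> by (rule prod_cases_X[OF X j anj that])
  define \<rho> where "\<rho> = (\<lambda>k. salpha j k + salpha i k)"
  have \<rho>s: "\<rho> = srefl n E i (salpha j)"
    using cform_alpha_alpha[OF j i, of E] cij by (simp add: srefl_def \<rho>_def)
  have \<rho>r: "\<rho> \<in> roots n E" unfolding \<rho>s by (rule root_srefl[OF diag i alpha_root[OF diag j]])
  have \<rho>p: "\<rho> \<in> pos_roots n E" using \<rho>r by (simp add: pos_roots_def \<rho>_def salpha_def)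
  have cii: "cartan E i i = 2" by (simp add: cartan_def)
  have \<rho>x: "?x \<rho> = 1" using i j cij cii by (simp add: \<rho>_def cform_add1 cform_alpha_alpha cform_alpha_self[OF diag])
  have \<rho>notin: "\<rho> \<notin> X"
  proof
    assume \<rho>X: "\<rho> \<in> X"
    have "ht n \<rho> = 2" using i j by (simp add: \<rho>_def ht_add ht_alpha)
    moreover have "ht n bi \<ge> 1" using pos_ht[OF diag orth_pos[OF diag X bi(1)]] .
    moreover have "ht n \<rho> \<ge> ht n bi + 2" using F10[OF \<rho>X \<rho>x] .
    ultimately show False by simp
  qed
  have rxy: "?x \<beta> + ?y \<beta> \<le> 1 \<and> ?x \<beta> + ?y \<beta> \<ge> -1" if b: "\<beta> \<in> X" for \<beta>
  proof -
    have br: "\<beta> \<in> roots n E" by (rule orth_root[OF diag X b])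
    have e: "cform n E \<beta> \<rho> = ?y \<beta> + ?x \<beta>" by (simp add: \<rho>_def cform_add2)
    have "\<beta> \<noteq> \<rho>" using \<rho>notin b by auto
    then have "cform n E \<beta> \<rho> \<le> 1" by (rule root_prod_le1[OF diag br \<rho>r])
    moreover have "cform n E \<beta> \<rho> \<ge> -1"
      by (rule root_prod_ge[OF diag br \<rho>r pos_ne_neg[OF diag orth_pos[OF diag X b] \<rho>p]])
    ultimately show ?thesis using e by simp
  qed
  have ybi: "?y bi = 0 \<or> ?y bi = 1" using rxy[OF bi(1)] ry[OF bi(1)] bi(2) by auto
  have xbj: "?x bj = 0 \<or> ?x bj = 1" using rxy[OF bj(1)] rx[OF bj(1)] bj(2) by auto
  have F01s: "ht n \<gamma> \<noteq> ht n bj + 2" if g: "\<gamma> \<in> X" "?y \<gamma> = 1" "?x \<gamma> = 0" and xb: "?x bj = 0" for \<gamma>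
  proof
    assume h: "ht n \<gamma> = ht n bj + 2"
    have gb: "\<gamma> \<noteq> bj" using g(2) bj(2) by auto
    have o: "cform n E \<gamma> bj = 0" by (rule orth_orth[OF diag X g(1) bj(1) gb])
    let ?\<delta> = "\<lambda>m. \<gamma> m - bj m - salpha j m"
    have dr: "?\<delta> \<in> roots n E"
      by (rule delta_root[OF diag orth_root[OF diag X bj(1)] orth_root[OF diag X g(1)] j o bj(2) g(2)])
    have "ht n ?\<delta> = 1" using h j by (simp add: ht_diff ht_alpha)
    moreover have "?x ?\<delta> = 1" using g xb cij i j by (simp add: cform_diff1 cform_alpha_alpha)
    ultimately show False using ht1_contra[OF dr _ i] by simp
  qed
  have F10s: "ht n \<gamma> \<noteq> ht n bi + 2" if g: "\<gamma> \<in> X" "?x \<gamma> = 1" "?y \<gamma> = 0" and yb: "?y bi = 0" for \<gamma>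
  proof
    assume h: "ht n \<gamma> = ht n bi + 2"
    have gb: "\<gamma> \<noteq> bi" using g(2) bi(2) by auto
    have o: "cform n E \<gamma> bi = 0" by (rule orth_orth[OF diag X g(1) bi(1) gb])
    let ?\<delta> = "\<lambda>m. \<gamma> m - bi m - salpha i m"
    have dr: "?\<delta> \<in> roots n E"
      by (rule delta_root[OF diag orth_root[OF diag X bi(1)] orth_root[OF diag X g(1)] i o bi(2) g(2)])
    have "ht n ?\<delta> = 1" using h i by (simp add: ht_diff ht_alpha)
    moreover have "?y ?\<delta> = 1" using g yb cij i j by (simp add: cform_diff1 cform_alpha_alpha)
    ultimately show False using ht1_contra[OF dr _ j] by simp
  qed
  have not11: "\<not> (?y bi = 1 \<and> ?x bj = 1)"
  proof
    assume a: "?y bi = 1 \<and> ?x bj = 1"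
    have "ht n bi \<ge> ht n bj + 2" using F01[OF bi(1)] a by simp
    moreover have "ht n bj \<ge> ht n bi + 2" using F10[OF bj(1)] a by simp
    ultimately show False by simp
  qed
  have ci_j: "?x (srefl n E j \<beta>) = ?x \<beta> + ?y \<beta>" for \<beta> using c_srefl[OF j i, of \<beta>] cij by simp
  have hj_: "ht n (srefl n E j \<beta>) = ht n \<beta> - ?y \<beta>" for \<beta> by (rule srefl_ht[OF diag j])
  have key1: "ht n e < ht n \<gamma> - ?y \<gamma>"
    if e: "e = srefl n E j bi \<and> ?y bi = 0 \<and> (?x bj = 1 \<or> ht n bi \<le> ht n bj + 1)
         \<or> e = srefl n E j bj \<and> ?x bj = 0 \<and> \<not> (?y bi = 0 \<and> (?x bj = 1 \<or> ht n bi \<le> ht n bj + 1))"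
    and g: "\<gamma> \<in> X" "?x \<gamma> + ?y \<gamma> = 1" for e \<gamma>
  proof -
    have cases: "?x \<gamma> = 1 \<and> ?y \<gamma> = 0 \<or> ?x \<gamma> = 0 \<and> ?y \<gamma> = 1" using rx[OF g(1)] ry[OF g(1)] g(2) by auto
    show ?thesis
    proof (cases "?x \<gamma> = 1 \<and> ?y \<gamma> = 0")
      case True
      have h: "ht n \<gamma> \<ge> ht n bi + 2" using F10[OF g(1)] True by simp
      from e show ?thesis
      proof
        assume "e = srefl n E j bi \<and> ?y bi = 0 \<and> (?x bj = 1 \<or> ht n bi \<le> ht n bj + 1)"
        then show ?thesis using h True by (simp add: hj_)
      next
        assume a: "e = srefl n E j bj \<and> ?x bj = 0 \<and> \<not> (?y bi = 0 \<and> (?x bj = 1 \<or> ht n bi \<le> ht n bj + 1))"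
        have "ht n bi \<ge> ht n bj + 2"
        proof (cases "?y bi = 1")
          case True then show ?thesis using F01[OF bi(1)] by simp
        next
          case False then show ?thesis using a ybi by auto
        qed
        then show ?thesis using a h True bj(2) by (simp add: hj_)
      qed
    next
      case False
      then have c2: "?x \<gamma> = 0" "?y \<gamma> = 1" using cases by auto
      have h: "ht n \<gamma> \<ge> ht n bj + 2" using F01[OF g(1) c2(2)] .
      from e show ?thesis
      proof
        assume a: "e = srefl n E j bi \<and> ?y bi = 0 \<and> (?x bj = 1 \<or> ht n bi \<le> ht n bj + 1)"
        show ?thesis
        proof (cases "?x bj = 1")
          case True
          have "ht n bj \<ge> ht n bi + 2" using F10[OF bj(1)] True by simp
          then show ?thesis using a h c2 by (simp add: hj_)
        next
          case False
          then have "?x bj = 0" using xbj by simp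
          then have "ht n \<gamma> \<noteq> ht n bj + 2" using F01s[OF g(1) c2(2) c2(1)] by simp
          then show ?thesis using a h c2 False by (simp add: hj_)
        qed
      next
        assume a: "e = srefl n E j bj \<and> ?x bj = 0 \<and> \<not> (?y bi = 0 \<and> (?x bj = 1 \<or> ht n bi \<le> ht n bj + 1))"
        have "ht n \<gamma> \<noteq> ht n bj + 2" using F01s[OF g(1) c2(2) c2(1)] a by simp
        then show ?thesis using a h c2 bj(2) by (simp add: hj_)
      qed
    qed
  qed
  define e where "e = (if ?y bi = 0 \<and> (?x bj = 1 \<or> ht n bi \<le> ht n bj + 1) then srefl n E j bi else srefl n E j bj)"
  have eprop: "e = srefl n E j bi \<and> ?y bi = 0 \<and> (?x bj = 1 \<or> ht n bi \<le> ht n bj + 1)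
         \<or> e = srefl n E j bj \<and> ?x bj = 0 \<and> \<not> (?y bi = 0 \<and> (?x bj = 1 \<or> ht n bi \<le> ht n bj + 1))"
    using xbj ybi not11 by (auto simp: e_def)
  have eX: "e \<in> srefl n E j ` X" using bi(1) bj(1) by (auto simp: e_def)
  have ex: "?x e = -1" using eprop bi(2) bj(2) by (auto simp: ci_j)
  show A1: "asc n E (act_set n E (srefl n E j) X) i"
    unfolding asc_def RJ
  proof (intro bexI[OF _ eX] conjI ballI impI)
    show "?x e = -1" by (rule ex)
  next
    fix d assume d: "d \<in> srefl n E j ` X" "?x d = 1"
    then obtain \<gamma> where g: "\<gamma> \<in> X" "d = srefl n E j \<gamma>" by auto
    have "?x \<gamma> + ?y \<gamma> = 1" using d(2) g(2) ci_j by simp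
    then show "ht n e < ht n d" using key1[OF eprop g(1)] g(2) by (simp add: hj_)
  qed
  have RJo: "orth_set n E (act_set n E (srefl n E j) X)" by (rule act_srefl_orth[OF X j])
  have aniJ: "salpha i \<notin> act_set n E (srefl n E j) X" by (rule asc_notin[OF RJo i A1])
  have R2: "act_set n E (srefl n E i) (act_set n E (srefl n E j) X) = srefl n E i ` srefl n E j ` X"
    using act_alpha_notin[OF diag RJo i aniJ] unfolding RJ .
  have cj2: "?y (srefl n E i (srefl n E j \<beta>)) = ?x \<beta>" for \<beta>
    using c_srefl[OF i j, of "srefl n E j \<beta>"] c_srefl[OF j j, of \<beta>] ci_j[of \<beta>] cij cartan_def[of E j j]
    by simp
  have h2: "ht n (srefl n E i (srefl n E j \<beta>)) = ht n \<beta> - ?y \<beta> - (?x \<beta> + ?y \<beta>)" for \<beta>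
    using srefl_ht[OF diag i, of "srefl n E j \<beta>"] ci_j[of \<beta>] hj_[of \<beta>] by simp
  show "asc n E (act_set n E (srefl n E i) (act_set n E (srefl n E j) X)) j"
    unfolding asc_def R2
  proof (intro bexI[of _ "srefl n E i (srefl n E j bi)"] conjI ballI impI)
    show "srefl n E i (srefl n E j bi) \<in> srefl n E i ` srefl n E j ` X" using bi(1) by simp
    show "?y (srefl n E i (srefl n E j bi)) = -1" using cj2 bi(2) by simp
  next
    fix d assume d: "d \<in> srefl n E i ` srefl n E j ` X" "?y d = 1"
    then obtain \<gamma> where g: "\<gamma> \<in> X" "d = srefl n E i (srefl n E j \<gamma>)" by auto
    have xg: "?x \<gamma> = 1" using d(2) g(2) cj2 by simp
    have hg: "ht n \<gamma> \<ge> ht n bi + 2" using F10[OF g(1) xg] .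
    have yg: "?y \<gamma> = 0 \<or> ?y \<gamma> = -1" using rxy[OF g(1)] ry[OF g(1)] xg by auto
    have "ht n bi - ?y bi - (?x bi + ?y bi) < ht n \<gamma> - ?y \<gamma> - (?x \<gamma> + ?y \<gamma>)"
    proof (cases "?y bi = 0")
      case True
      show ?thesis
      proof (cases "?y \<gamma> = 0")
        case True
        have "ht n \<gamma> \<noteq> ht n bi + 2" using F10s[OF g(1) xg True] \<open>?y bi = 0\<close> by simp
        then show ?thesis using hg xg True \<open>?y bi = 0\<close> bi(2) by simp
      next
        case False
        then show ?thesis using hg xg yg \<open>?y bi = 0\<close> bi(2) by simp
      qed
    next
      case False
      then have "?y bi = 1" using ybi by simp
      then show ?thesis using hg xg yg bi(2) by auto
    qed
    then show "ht n (srefl n E i (srefl n E j bi)) < ht n d" using g(2) h2 by simp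
  qed
qed

end

context
  fixes n :: nat and E :: "nat \<Rightarrow> nat \<Rightarrow> bool"
  assumes diag: "sl_spherical n E"
begin

lemma act_comm:
  assumes X: "orth_set n E X" and i: "i \<in> nodes n" and j: "j \<in> nodes n" and ij: "i \<noteq> j" and nE: "\<not> E i j"
  shows "act_set n E (srefl n E i) (act_set n E (srefl n E j) X) = act_set n E (srefl n E j) (act_set n E (srefl n E i) X)"
proof -
  have XR: "X \<subseteq> roots n E" using X orth_root[OF diag X] by blast
  have "act_set n E (srefl n E i) (act_set n E (srefl n E j) X) = act_set n E (srefl n E i \<circ> srefl n E j) X"
    by (rule act_comp[OF diag srefl_weyl[OF i] srefl_weyl[OF j] XR, symmetric])
  also have "srefl n E i \<circ> srefl n E j = srefl n E j \<circ> srefl n E i" by (rule srefl_commute[OF diag i j ij nE])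
  also have "act_set n E (srefl n E j \<circ> srefl n E i) X = act_set n E (srefl n E j) (act_set n E (srefl n E i) X)"
    by (rule act_comp[OF diag srefl_weyl[OF j] srefl_weyl[OF i] XR])
  finally show ?thesis .
qed

lemma act_braid:
  assumes X: "orth_set n E X" and i: "i \<in> nodes n" and j: "j \<in> nodes n" and Eij: "E i j"
  shows "act_set n E (srefl n E j) (act_set n E (srefl n E i) (act_set n E (srefl n E j) X))
       = act_set n E (srefl n E i) (act_set n E (srefl n E j) (act_set n E (srefl n E i) X))"
proof -
  have XR: "X \<subseteq> roots n E" using X orth_root[OF diag X] by blast
  have c3: "act_set n E (srefl n E a) (act_set n E (srefl n E b) (act_set n E (srefl n E c) X))
      = act_set n E (srefl n E a \<circ> srefl n E b \<circ> srefl n E c) X"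
    if abc: "a \<in> nodes n" "b \<in> nodes n" "c \<in> nodes n" for a b c
  proof -
    have o1: "orth_set n E (act_set n E (srefl n E c) X)" by (rule act_srefl_orth[OF diag X abc(3)])
    have R1: "act_set n E (srefl n E c) X \<subseteq> roots n E" using orth_root[OF diag o1] by blast
    have "act_set n E (srefl n E b) (act_set n E (srefl n E c) X) = act_set n E (srefl n E b \<circ> srefl n E c) X"
      by (rule act_comp[OF diag srefl_weyl[OF abc(2)] srefl_weyl[OF abc(3)] XR, symmetric])
    moreover have "act_set n E (srefl n E a) (act_set n E (srefl n E b \<circ> srefl n E c) X)
        = act_set n E (srefl n E a \<circ> (srefl n E b \<circ> srefl n E c)) X"
      by (rule act_comp[OF diag srefl_weyl[OF abc(1)] weyl_comp[OF srefl_weyl[OF abc(2)] srefl_weyl[OF abc(3)]] XR, symmetric])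
    ultimately show ?thesis by (simp add: comp_assoc)
  qed
  show ?thesis using c3[OF j i j] c3[OF i j i] srefl_braid[OF diag i j Eij] by simp
qed

end

context
  fixes n :: nat and E :: "nat \<Rightarrow> nat \<Rightarrow> bool" and BB :: "(nat \<Rightarrow> int) set set" and B0 :: "(nat \<Rightarrow> int) set"
  assumes diag: "sl_spherical n E"
    and adm: "admissible n E BB"
    and B0_in: "B0 \<in> BB"
    and B0_max: "\<forall>C. (B0, C) \<notin> mon_less n E BB"
begin

lemma Bs_ex: "\<exists>Bs. orth_set n E Bs \<and> BB = {act_set n E w Bs | w. w \<in> weyl n E}"
  using adm unfolding admissible_def by blast

lemma BB_orth: "X \<in> BB \<Longrightarrow> orth_set n E X"
  using Bs_ex act_orth[OF diag] by blast

lemma BB_roots: "X \<in> BB \<Longrightarrow> X \<subseteq> roots n E"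
  using BB_orth orth_root[OF diag] by blast

lemma BB_act: "X \<in> BB \<Longrightarrow> w \<in> weyl n E \<Longrightarrow> act_set n E w X \<in> BB"
proof -
  assume X: "X \<in> BB" and w: "w \<in> weyl n E"
  obtain Bs where Bs: "orth_set n E Bs" "BB = {act_set n E w Bs | w. w \<in> weyl n E}" using Bs_ex by blast
  obtain u where u: "u \<in> weyl n E" "X = act_set n E u Bs" using X Bs(2) by blast
  have "act_set n E w X = act_set n E (w \<circ> u) Bs"
    using act_comp[OF diag w u(1)] orth_root[OF diag Bs(1)] u(2) by blast
  then show ?thesis using Bs(2) weyl_comp[OF w u(1)] by blast
qed

lemma BB_r: "X \<in> BB \<Longrightarrow> i \<in> nodes n \<Longrightarrow> act_set n E (srefl n E i) X \<in> BB"
  using BB_act srefl_weyl by blast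

lemma BB_from0: "X \<in> BB \<Longrightarrow> \<exists>w\<in>weyl n E. act_set n E w B0 = X"
proof -
  assume X: "X \<in> BB"
  obtain Bs where Bs: "orth_set n E Bs" "BB = {act_set n E w Bs | w. w \<in> weyl n E}" using Bs_ex by blast
  have BsR: "Bs \<subseteq> roots n E" using orth_root[OF diag Bs(1)] by blast
  obtain u where u: "u \<in> weyl n E" "B0 = act_set n E u Bs" using B0_in Bs(2) by blast
  obtain v where v: "v \<in> weyl n E" "X = act_set n E v Bs" using X Bs(2) by blast
  obtain u' where u': "u' \<in> weyl n E" "u' \<circ> u = id" "u \<circ> u' = id" using weyl_inv[OF diag u(1)] by blast
  have "act_set n E (v \<circ> u') B0 = act_set n E (v \<circ> u' \<circ> u) Bs"
    unfolding u(2) by (rule act_comp[OF diag weyl_comp[OF v(1) u'(1)] u(1) BsR, symmetric])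
  also have "v \<circ> u' \<circ> u = v" using u'(2) by (simp add: comp_assoc)
  finally show ?thesis using v weyl_comp[OF v(1) u'(1)] by blast
qed

lemma BB_adm: "X \<in> BB \<Longrightarrow> i \<in> nodes n \<Longrightarrow> j \<in> nodes n \<Longrightarrow> \<not> E i j \<Longrightarrow>
   \<forall>\<gamma>. \<gamma> \<in> X \<and> (\<lambda>k. \<gamma> k - salpha i k + salpha j k) \<in> X \<longrightarrow> act_set n E (srefl n E i) X = act_set n E (srefl n E j) X"
  using adm unfolding admissible_def by blast

definition dd :: "(nat \<Rightarrow> int) set \<Rightarrow> nat" where
  "dd X = (LEAST k. \<exists>ws. set ws \<subseteq> nodes n \<and> length ws = k \<and> act_set n E (word_act n E ws) B0 = X)"

lemma dd_ex: "X \<in> BB \<Longrightarrow> \<exists>ws. set ws \<subseteq> nodes n \<and> length ws = dd X \<and> act_set n E (word_act n E ws) B0 = X"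
proof -
  assume X: "X \<in> BB"
  obtain w where w: "w \<in> weyl n E" "act_set n E w B0 = X" using BB_from0[OF X] by blast
  obtain ws where "set ws \<subseteq> nodes n" "w = word_act n E ws" using w(1) by (auto simp: weyl_iff)
  then have "\<exists>k ws. set ws \<subseteq> nodes n \<and> length ws = k \<and> act_set n E (word_act n E ws) B0 = X" using w by blast
  then show ?thesis unfolding dd_def by (rule LeastI_ex)
qed

lemma dd_le: "set ws \<subseteq> nodes n \<Longrightarrow> act_set n E (word_act n E ws) B0 = X \<Longrightarrow> dd X \<le> length ws"
  unfolding dd_def by (rule Least_le) blast

lemma dd_wlen: "w \<in> weyl n E \<Longrightarrow> act_set n E w B0 = X \<Longrightarrow> dd X \<le> wlen n E w"
proof -
  assume w: "w \<in> weyl n E" "act_set n E w B0 = X"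
  obtain ws where ws: "set ws \<subseteq> nodes n" "length ws = wlen n E w" "word_act n E ws = w" using wlen_ex[OF w(1)] by blast
  show ?thesis using dd_le[OF ws(1)] ws w(2) by simp
qed

lemma B0R: "B0 \<subseteq> roots n E" by (rule BB_roots[OF B0_in])

lemma act_word_cons: "set ws \<subseteq> nodes n \<Longrightarrow> i \<in> nodes n \<Longrightarrow>
   act_set n E (word_act n E (i # ws)) B0 = act_set n E (srefl n E i) (act_set n E (word_act n E ws) B0)"
  using act_comp[OF diag srefl_weyl word_weyl B0R] by simp

lemma dd_step: "X \<in> BB \<Longrightarrow> i \<in> nodes n \<Longrightarrow> dd (act_set n E (srefl n E i) X) \<le> dd X + 1"
proof -
  assume X: "X \<in> BB" and i: "i \<in> nodes n"
  obtain ws where ws: "set ws \<subseteq> nodes n" "length ws = dd X" "act_set n E (word_act n E ws) B0 = X"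
    using dd_ex[OF X] by blast
  have "act_set n E (word_act n E (i # ws)) B0 = act_set n E (srefl n E i) X"
    using act_word_cons[OF ws(1) i] ws(3) by simp
  then have "dd (act_set n E (srefl n E i) X) \<le> length (i # ws)" using ws(1) i by (intro dd_le) auto
  then show ?thesis using ws(2) by simp
qed

lemma dd_zero: "X \<in> BB \<Longrightarrow> dd X = 0 \<Longrightarrow> X = B0"
proof -
  assume X: "X \<in> BB" and z: "dd X = 0"
  obtain ws where ws: "set ws \<subseteq> nodes n" "length ws = dd X" "act_set n E (word_act n E ws) B0 = X"
    using dd_ex[OF X] by blast
  then have "ws = []" using z by simp
  then have "X = act_set n E id B0" using ws(3) by simp
  also have "\<dots> = B0" using act_id[OF diag] BB_orth[OF B0_in] by (simp add: orth_set_def)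
  finally show ?thesis .
qed

lemma dd_pred: "X \<in> BB \<Longrightarrow> dd X = Suc m \<Longrightarrow> \<exists>j\<in>nodes n. \<exists>Y\<in>BB. X = act_set n E (srefl n E j) Y \<and> dd Y \<le> m"
proof -
  assume X: "X \<in> BB" and s: "dd X = Suc m"
  obtain ws where ws: "set ws \<subseteq> nodes n" "length ws = dd X" "act_set n E (word_act n E ws) B0 = X"
    using dd_ex[OF X] by blast
  then obtain j ws' where jw: "ws = j # ws'" using s by (cases ws) auto
  let ?Y = "act_set n E (word_act n E ws') B0"
  have j: "j \<in> nodes n" and ws': "set ws' \<subseteq> nodes n" using ws(1) jw by auto
  have Y: "?Y \<in> BB" using BB_act[OF B0_in word_weyl[OF ws']] .
  have "X = act_set n E (srefl n E j) ?Y" using act_word_cons[OF ws' j] ws(3) jw by simp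
  moreover have "dd ?Y \<le> m" using dd_le[OF ws' refl] ws(2) s jw by simp
  ultimately show ?thesis using j Y by blast
qed

lemma base_in: "B \<in> BB \<Longrightarrow> j \<in> nodes n \<Longrightarrow> prec n B (act_set n E (srefl n E j) B) \<Longrightarrow>
   (B, act_set n E (srefl n E j) B) \<in> mon_less n E BB"
  unfolding mon_less_def by (rule r_into_trancl) blast

lemma K_aux: "\<forall>X i. dd X = m \<longrightarrow> X \<in> BB \<longrightarrow> i \<in> nodes n \<longrightarrow> prec n X (act_set n E (srefl n E i) X) \<longrightarrow>
   dd (act_set n E (srefl n E i) X) < m"
proof (induction m rule: less_induct)
  case (less m)
  let ?r = "\<lambda>k Z. act_set n E (srefl n E k) Z"
  have IH: "dd (?r k Z) < dd Z" if "dd Z < m" "Z \<in> BB" "k \<in> nodes n" "prec n Z (?r k Z)" for Z k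
    using less.IH[OF that(1)] that by blast
  show ?case
  proof (intro allI impI)
    fix X i assume dX: "dd X = m" and X: "X \<in> BB" and i: "i \<in> nodes n" and p: "prec n X (?r i X)"
    have Xo: "orth_set n E X" by (rule BB_orth[OF X])
    show "dd (?r i X) < m"
    proof (cases "dd X")
      case 0
      then have "X = B0" using dd_zero[OF X] by simp
      then show ?thesis using base_in[OF X i p] B0_max by simp
    next
      case (Suc m')
      obtain j Y where jY: "j \<in> nodes n" "Y \<in> BB" "X = ?r j Y" "dd Y \<le> m'" using dd_pred[OF X Suc] by blast
      have j: "j \<in> nodes n" by (rule jY(1))
      have YB: "Y \<in> BB" by (rule jY(2))
      have dY: "dd Y < m" using jY(4) Suc dX by simp
      have Yo: "orth_set n E Y" by (rule BB_orth[OF YB])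
      have XjY: "?r j X = Y" using act_invol[OF diag Yo j] jY(3) by simp
      have XY: "X \<noteq> Y" using jY(4) Suc by auto
      have npYX: "\<not> prec n Y X"
      proof
        assume pYX: "prec n Y X"
        have "prec n Y (?r j Y)" using pYX jY(3) by simp
        then have "dd (?r j Y) < dd Y" by (rule IH[OF dY YB j])
        then have "dd X < dd Y" using jY(3) by simp
        then show False using jY(4) Suc by simp
      qed
      have "?r j Y \<noteq> Y" using XY jY(3) by simp
      then have "prec n Y (?r j Y) \<or> prec n (?r j Y) Y" by (rule prec_trich[OF diag Yo j])
      then have "prec n Y X \<or> prec n X Y" using jY(3) by simp
      then have pXj: "prec n X (?r j X)" using npYX XjY by simp
      have aj: "asc n E X j" using prec_iff[OF diag Xo j] pXj by simp
      have ai: "asc n E X i" using prec_iff[OF diag Xo i] p by simp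
      show ?thesis
      proof (cases "?r i X = ?r j X")
        case True
        then show ?thesis using XjY dY by simp
      next
        case ne: False
        then have ij: "i \<noteq> j" by auto
        show ?thesis
        proof (cases "E i j")
          case True
          have A1: "asc n E Y i" using diamond_braid(1)[OF diag Xo i j True ai aj] XjY by simp
          have A2: "asc n E (?r i Y) j" using diamond_braid(2)[OF diag Xo i j True ai aj] XjY by simp
          have pY: "prec n Y (?r i Y)" using prec_iff[OF diag Yo i] A1 by simp
          have d2: "dd (?r i Y) < dd Y" by (rule IH[OF dY YB i pY])
          have D2B: "?r i Y \<in> BB" by (rule BB_r[OF YB i])
          have D2o: "orth_set n E (?r i Y)" by (rule BB_orth[OF D2B])
          have pD2: "prec n (?r i Y) (?r j (?r i Y))" using prec_iff[OF diag D2o j] A2 by simp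
          have d3: "dd (?r j (?r i Y)) < dd (?r i Y)" by (rule IH[OF _ D2B j pD2]) (use d2 dY in simp)
          have D3B: "?r j (?r i Y) \<in> BB" by (rule BB_r[OF D2B j])
          have br0: "?r j (?r i (?r j X)) = ?r i (?r j (?r i X))" by (rule act_braid[OF diag Xo i j True])
          have br: "?r j (?r i Y) = ?r i (?r j (?r i X))" using br0 XjY by simp
          have XiB: "?r i X \<in> BB" by (rule BB_r[OF X i])
          have XiO: "orth_set n E (?r i X)" by (rule BB_orth[OF XiB])
          have XijO: "orth_set n E (?r j (?r i X))" by (rule BB_orth[OF BB_r[OF XiB j]])
          have bk: "?r j (?r i (?r j (?r i Y))) = ?r i X"
            using br act_invol[OF diag XijO i] act_invol[OF diag XiO j] by simp
          have s1: "dd (?r i (?r j (?r i Y))) \<le> dd (?r j (?r i Y)) + 1" by (rule dd_step[OF D3B i])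
          have s2: "dd (?r j (?r i (?r j (?r i Y)))) \<le> dd (?r i (?r j (?r i Y))) + 1"
            by (rule dd_step[OF BB_r[OF D3B i] j])
          have "dd (?r i X) \<le> dd (?r j (?r i Y)) + 2" using s1 s2 bk by simp
          then show ?thesis using d2 d3 dY by simp
        next
          case False
          have admI: "\<forall>\<gamma>. \<gamma> \<in> ?r i X \<and> (\<lambda>k. \<gamma> k - salpha i k + salpha j k) \<in> ?r i X
              \<longrightarrow> ?r i (?r i X) = ?r j (?r i X)"
            by (rule BB_adm[OF BB_r[OF X i] i j False])
          have A: "asc n E (?r j X) i" by (rule diamond_comm[OF diag Xo i j ij False ai aj ne admI])
          have pY: "prec n Y (?r i Y)" using prec_iff[OF diag Yo i] A XjY by simp
          have d2: "dd (?r i Y) < dd Y" by (rule IH[OF dY YB i pY])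
          have cm0: "?r i (?r j X) = ?r j (?r i X)" by (rule act_comm[OF diag Xo i j ij False])
          have cm: "?r i Y = ?r j (?r i X)" using cm0 XjY by simp
          have XiO: "orth_set n E (?r i X)" by (rule BB_orth[OF BB_r[OF X i]])
          have bk: "?r j (?r i Y) = ?r i X" using cm act_invol[OF diag XiO j] by simp
          have "dd (?r j (?r i Y)) \<le> dd (?r i Y) + 1" by (rule dd_step[OF BB_r[OF YB i] j])
          then show ?thesis using bk d2 dY by simp
        qed
      qed
    qed
  qed
qed

lemma K: "X \<in> BB \<Longrightarrow> i \<in> nodes n \<Longrightarrow> prec n X (act_set n E (srefl n E i) X) \<Longrightarrow>
   dd (act_set n E (srefl n E i) X) < dd X"
  using K_aux by blast

lemma closure_dd: "(X, Z) \<in> mon_less n E BB \<Longrightarrow> X \<in> BB \<and> Z \<in> BB \<and> dd Z < dd X"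
  unfolding mon_less_def
proof (induction rule: trancl_induct)
  case (base y)
  then obtain B j where "X = B" "y = act_set n E (srefl n E j) B" "B \<in> BB" "j \<in> nodes n"
    "prec n B (act_set n E (srefl n E j) B)" by blast
  then show ?case using K BB_r by blast
next
  case (step y z)
  then obtain B j where "y = B" "z = act_set n E (srefl n E j) B" "B \<in> BB" "j \<in> nodes n"
    "prec n B (act_set n E (srefl n E j) B)" by blast
  then show ?case using K BB_r step.IH by fastforce
qed

lemma dd_minrep: "B \<in> BB \<Longrightarrow> min_rep n E B0 B w \<Longrightarrow> dd B = wlen n E w"
proof -
  assume B: "B \<in> BB" and m: "min_rep n E B0 B w"
  have w: "w \<in> weyl n E" "act_set n E w B0 = B" using m by (auto simp: min_rep_def)
  obtain ws where ws: "set ws \<subseteq> nodes n" "length ws = dd B" "act_set n E (word_act n E ws) B0 = B"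
    using dd_ex[OF B] by blast
  have "wlen n E w \<le> wlen n E (word_act n E ws)" using m ws word_weyl[OF ws(1)] by (auto simp: min_rep_def)
  also have "\<dots> \<le> dd B" using wlen_word[OF ws(1)] ws(2) by simp
  finally show ?thesis using dd_wlen[OF w] by simp
qed

lemma main_i:
  assumes B: "B \<in> BB" and m: "min_rep n E B0 B w" and i: "i \<in> nodes n"
    and l: "wlen n E (srefl n E i \<circ> w) < wlen n E w"
  shows "(B, act_set n E (srefl n E i) B) \<in> mon_less n E BB"
proof -
  let ?R = "act_set n E (srefl n E i) B"
  have w: "w \<in> weyl n E" "act_set n E w B0 = B" using m by (auto simp: min_rep_def)
  have dB: "dd B = wlen n E w" by (rule dd_minrep[OF B m])
  have "act_set n E (srefl n E i \<circ> w) B0 = ?R" using act_comp[OF diag srefl_weyl[OF i] w(1) B0R] w(2) by simp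
  then have "dd ?R \<le> wlen n E (srefl n E i \<circ> w)" using dd_wlen[OF srefl_comp_weyl[OF i w(1)]] by simp
  then have lt: "dd ?R < dd B" using l dB by simp
  then have ne: "?R \<noteq> B" by auto
  have Bo: "orth_set n E B" by (rule BB_orth[OF B])
  have RB: "?R \<in> BB" by (rule BB_r[OF B i])
  have "\<not> prec n ?R B"
  proof
    assume "prec n ?R B"
    then have "prec n ?R (act_set n E (srefl n E i) ?R)" using act_invol[OF diag Bo i] by simp
    then have "dd (act_set n E (srefl n E i) ?R) < dd ?R" by (rule K[OF RB i])
    then show False using act_invol[OF diag Bo i] lt by simp
  qed
  then have "prec n B ?R" using prec_trich[OF diag Bo i ne] by blast
  then show ?thesis by (rule base_in[OF B i])
qed

lemma main_ii:
  assumes B: "B \<in> BB" and m: "min_rep n E B0 B w" and i: "i \<in> nodes n"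
    and p: "(B, act_set n E (srefl n E i) B) \<in> mon_less n E BB"
  shows "\<exists>w''\<in>weyl n E. wlen n E w'' = wlen n E w \<and> act_set n E w'' B0 = B \<and>
                  wlen n E (srefl n E i \<circ> w'') < wlen n E w''"
proof -
  let ?R = "act_set n E (srefl n E i) B"
  have dB: "dd B = wlen n E w" by (rule dd_minrep[OF B m])
  have c: "?R \<in> BB" "dd ?R < dd B" using closure_dd[OF p] by auto
  obtain ws where ws: "set ws \<subseteq> nodes n" "length ws = dd ?R" "act_set n E (word_act n E ws) B0 = ?R"
    using dd_ex[OF c(1)] by blast
  let ?w1 = "word_act n E ws"
  let ?w = "srefl n E i \<circ> ?w1"
  have w1: "?w1 \<in> weyl n E" by (rule word_weyl[OF ws(1)])
  have ww: "?w \<in> weyl n E" by (rule srefl_comp_weyl[OF i w1])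
  have Bo: "orth_set n E B" by (rule BB_orth[OF B])
  have act: "act_set n E ?w B0 = B"
    using act_comp[OF diag srefl_weyl[OF i] w1 B0R] ws(3) act_invol[OF diag Bo i] by simp
  have l1: "wlen n E ?w \<le> wlen n E ?w1 + 1" by (rule wlen_srefl_comp[OF i w1])
  have l2: "wlen n E ?w1 \<le> dd ?R" using wlen_word[OF ws(1)] ws(2) by simp
  have l3: "wlen n E w \<le> wlen n E ?w" using m ww act by (auto simp: min_rep_def)
  have eq: "wlen n E ?w = wlen n E w" using l1 l2 l3 c(2) dB by simp
  have "srefl n E i \<circ> ?w = ?w1" using srefl_comp_invol[OF diag i] by (simp add: comp_assoc[symmetric])
  then have "wlen n E (srefl n E i \<circ> ?w) < wlen n E ?w" using l2 c(2) dB eq by simp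
  then show ?thesis using ww eq act by blast
qed

end

theorem lemma3p8:
  fixes n :: nat and E :: "nat \<Rightarrow> nat \<Rightarrow> bool"
    and \<B> :: "(nat \<Rightarrow> int) set set" and B0 :: "(nat \<Rightarrow> int) set"
  assumes diag: "sl_spherical n E"
    and adm: "admissible n E \<B>"
    and B0_in: "B0 \<in> \<B>"
    and B0_max: "\<forall>C. (B0, C) \<notin> mon_less n E \<B>"
    and B0_unique: "\<forall>C\<in>\<B>. (\<forall>D. (C, D) \<notin> mon_less n E \<B>) \<longrightarrow> C = B0"
  shows "(\<forall>B\<in>\<B>. \<forall>w. min_rep n E B0 B w \<longrightarrow>
            (\<forall>i\<in>nodes n. wlen n E (srefl n E i \<circ> w) < wlen n E w \<longrightarrow>
               (B, act_set n E (srefl n E i) B) \<in> mon_less n E \<B>))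
       \<and> (\<forall>B\<in>\<B>. \<forall>w w'. min_rep n E B0 B w \<and> min_rep n E B0 B w' \<longrightarrow>
            wlen n E w = wlen n E w' \<and>
            (\<forall>i\<in>nodes n. (B, act_set n E (srefl n E i) B) \<in> mon_less n E \<B> \<longrightarrow>
               (\<exists>w''\<in>weyl n E. wlen n E w'' = wlen n E w \<and> act_set n E w'' B0 = B \<and>
                  wlen n E (srefl n E i \<circ> w'') < wlen n E w'')))"
proof (intro conjI)
  show "\<forall>B\<in>\<B>. \<forall>w. min_rep n E B0 B w \<longrightarrow>
            (\<forall>i\<in>nodes n. wlen n E (srefl n E i \<circ> w) < wlen n E w \<longrightarrow>
               (B, act_set n E (srefl n E i) B) \<in> mon_less n E \<B>)"
    using main_i[OF diag adm B0_in B0_max] by blast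
next
  show "\<forall>B\<in>\<B>. \<forall>w w'. min_rep n E B0 B w \<and> min_rep n E B0 B w' \<longrightarrow>
            wlen n E w = wlen n E w' \<and>
            (\<forall>i\<in>nodes n. (B, act_set n E (srefl n E i) B) \<in> mon_less n E \<B> \<longrightarrow>
               (\<exists>w''\<in>weyl n E. wlen n E w'' = wlen n E w \<and> act_set n E w'' B0 = B \<and>
                  wlen n E (srefl n E i \<circ> w'') < wlen n E w''))"
  proof (intro ballI allI impI)
    fix B w w' assume B: "B \<in> \<B>" and m: "min_rep n E B0 B w \<and> min_rep n E B0 B w'"
    have "wlen n E w \<le> wlen n E w'" "wlen n E w' \<le> wlen n E w" using m by (auto simp: min_rep_def)
    then have eq: "wlen n E w = wlen n E w'" by simp
    have ex: "\<forall>i\<in>nodes n. (B, act_set n E (srefl n E i) B) \<in> mon_less n E \<B> \<longrightarrow>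
               (\<exists>w''\<in>weyl n E. wlen n E w'' = wlen n E w \<and> act_set n E w'' B0 = B \<and>
                  wlen n E (srefl n E i \<circ> w'') < wlen n E w'')"
      using main_ii[OF diag adm B0_in B0_max B] m by blast
    show "wlen n E w = wlen n E w' \<and>
            (\<forall>i\<in>nodes n. (B, act_set n E (srefl n E i) B) \<in> mon_less n E \<B> \<longrightarrow>
               (\<exists>w''\<in>weyl n E. wlen n E w'' = wlen n E w \<and> act_set n E w'' B0 = B \<and>
                  wlen n E (srefl n E i \<circ> w'') < wlen n E w''))"
      using eq ex by blast
  qed
qed

end
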